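(* Let $B'\in\mathcal X^+_{N-2}$ and $B\in{}'\mathcal X^{0,+}_{N-2}$ with $B'\preceq B$. Then $B'\in{}'\mathcal X^{0,+}_{N-2}$.
   Context: Let $N\ge 3$ be an odd integer and $F=\mathbb Z/2\mathbb Z$. For integers $i,j$ let $[i,j]=\{h\in\mathbb Z: i\le h\le j\}$ (empty if $i>j$). Let $S_N=[1,N]$. The set of all subsets of $S_N$ is an $F$-vector space with sum $X+X'=(X\cup X')-(X\cap X')$; let $E_N$ be the subspace of subsets of even cardinality. A $2$-element subset $\{i,j\}\subseteq S_N$ is written $ij$ when either ($i<j$ and $j-i$ odd) or ($i>j$ and $i-j$ even); each $2$-element subset has exactly one such writing. Let $\mathcal P_N$ be the set of all finite sets $B$ of pairwise disjoint $2$-element subsets of $S_N$; for $B\in\mathcal P_N$ let $\langle B\rangle$ be the $F$-subspace of $E_N$ spanned by the elements of $B$, $\mathrm{supp}(B)=\bigcup_{X\in B}X$, $B^0=\{\{i,j\}\in B: i-j\text{ even}\}$, $B^1=\{\{i,j\}\in B: i-j\text{ odd}\}$. A set $X\subseteq S_N$ is $0$-covered (resp. $1$-covered) by $B^1$ if there are $a_1b_1,\dots,a_sb_s\in B^1$ ($s\ge 0$, so $a_r<b_r$) with $X=[a_1,b_1]\sqcup\dots\sqcup[a_s,b_s]$ (resp. $X=[a_1,b_1]\sqcup\dots\sqcup[a_s,b_s]\sqcup\{u\}$ for some $u$), disjoint unions. Let ${}^*\mathcal P_N$ be the set of $B\in\mathcal P_N$ such that: for every $ij\in B^1$ the set $[i+1,j-1]$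 is $0$-covered by $B^1$; and there is a sequence $i_*(B)=(i_1,\dots,i_{2s})$ in $S_N$ with $B^0=\{i_{2s}i_1,i_{2s-1}i_2,\dots,i_{s+1}i_s\}$ (so $s=|B^0|$; the sequence is unique) such that, if $s\ge1$, each of $[i_1+1,i_2-1],\dots,[i_{s-1}+1,i_s-1],[i_{s+1}+1,i_{s+2}-1],\dots,[i_{2s-1}+1,i_{2s}-1]$ is $0$-covered by $B^1$. For $B\in{}^*\mathcal P_N$ with $i_*(B)=(i_1,\dots,i_{2s})$ consider: (I) $s=0$, or $s\ge1$ and $[1,i_1-1]$ and $[i_{2s}+1,N]$ are $0$-covered by $B^1$; (II) $N\notin\mathrm{supp}(B)$ and either $s=0$, or $s$ is odd and either (i) $[1,i_1-1]$ is $1$-covered and $[i_{2s}+1,N-1]$ is $0$-covered by $B^1$, or (ii) $[1,i_1-1]$ is $0$-covered and $[i_{2s}+1,N-1]$ is $1$-covered by $B^1$; (III) (I) holds and, if $s$ is even then $\{i,N\}\in B$ for some even $i$, if $s$ is odd then $\{i,N\}\in B$ for some odd $i$. Let $\mathcal X^+_{N-2}$, $\mathcal X^-_{N-2}$ be the sets of $B\in{}^*\mathcal P_N$ satisfying (II), (III) respectively, and $\mathcal X_{N-2}=\mathcal X^+_{N-2}\sqcup\mathcal X^-_{N-2}$. For $B\in\mathcal X^+_{N-2}$ with $s\ge1$ there is a unique $u_B$: in case (i), $u_B\in[1,i_1-1]$ with $[1,u_B-1]$, $[u_B+1,i_1-1]$ $0$-covered by $B^1$ ($u_B$ odd); in case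 (ii), $u_B\in[i_{2s}+1,N-1]$ with $[i_{2s}+1,u_B-1]$, $[u_B+1,N-1]$ $0$-covered by $B^1$ ($u_B$ even). Let ${}'\mathcal X^{0,+}_{N-2}=\{B\in\mathcal X^+_{N-2}:|B^0|=0,\ N-1\notin\mathrm{supp}(B)\}$. Put $[[ij]]=[i,j]$ if $i<j$ and $[[ij]]=[i,N]\cup[1,j]$ if $i>j$. For $B\in\mathcal X_{N-2}$ define ${}'\epsilon(B)\in E_N$: ${}'\epsilon(B)=\sum_{ij\in B}[[ij]]$ if $B\in\mathcal X^-_{N-2}$ or if $B\in\mathcal X^+_{N-2}$ with $|B^0|=0$; ${}'\epsilon(B)=\sum_{ij\in B}[[ij]]+[u_B,N]$ if $B\in\mathcal X^+_{N-2}$, $|B^0|$ odd, $u_B$ even; ${}'\epsilon(B)=\sum_{ij\in B}[[ij]]+\{N\}+[1,u_B]$ if $B\in\mathcal X^+_{N-2}$, $|B^0|$ odd, $u_B$ odd. For $B,B'\in\mathcal X_{N-2}$ write $B'\preceq B$ if there is a sequence $B'=B_0,\dots,B_h=B$ ($h\ge0$) in $\mathcal X_{N-2}$ with ${}'\epsilon(B_k)\in\langle B_{k+1}\rangle$ for $k=0,\dots,h-1$. *)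

theory Defs
  imports Main
begin

definition symd :: "nat set \<Rightarrow> nat set \<Rightarrow> nat set" where
  "symd X Y = (X - Y) \<union> (Y - X)"

(* F_2-sum (iterated symmetric difference) of a finite family f indexed by C *)
definition xsumI :: "('a \<Rightarrow> nat set) \<Rightarrow> 'a set \<Rightarrow> nat set" where
  "xsumI f C = {x. odd (card {p \<in> C. x \<in> f p})}"

definition spanB :: "nat set set \<Rightarrow> nat set set" where
  "spanB B = {xsumI (\<lambda>X. X) C | C. C \<subseteq> B}"

(* the pair {i,j} is written ij *)
definition writ :: "nat \<Rightarrow> nat \<Rightarrow> bool" where
  "writ i j \<longleftrightarrow> (i < j \<and> odd (j - i)) \<or> (i > j \<and> even (i - j))"

definition wpair :: "nat set \<Rightarrow> nat \<times> nat" where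
  "wpair p = (THE ij. p = {fst ij, snd ij} \<and> writ (fst ij) (snd ij))"

definition PN :: "nat \<Rightarrow> nat set set \<Rightarrow> bool" where
  "PN N B \<longleftrightarrow> finite B \<and> (\<forall>p\<in>B. p \<subseteq> {1..N} \<and> card p = 2)
     \<and> (\<forall>p\<in>B. \<forall>q\<in>B. p \<noteq> q \<longrightarrow> p \<inter> q = {})"

definition B0 :: "nat set set \<Rightarrow> nat set set" where
  "B0 B = {p \<in> B. even (Max p - Min p)}"

definition B1 :: "nat set set \<Rightarrow> nat set set" where
  "B1 B = {p \<in> B. odd (Max p - Min p)}"

(* for ij in B^1 (so i < j): the interval [i,j] *)
definition iv :: "nat set \<Rightarrow> nat set" where
  "iv p = {fst (wpair p) .. snd (wpair p)}"

definition cov0 :: "nat set set \<Rightarrow> nat set \<Rightarrow> bool" where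
  "cov0 B X \<longleftrightarrow> (\<exists>C. C \<subseteq> B1 B \<and> (\<forall>p\<in>C. \<forall>q\<in>C. p \<noteq> q \<longrightarrow> iv p \<inter> iv q = {})
       \<and> X = \<Union>(iv ` C))"

definition cov1 :: "nat set set \<Rightarrow> nat set \<Rightarrow> bool" where
  "cov1 B X \<longleftrightarrow> (\<exists>C u. C \<subseteq> B1 B \<and> (\<forall>p\<in>C. \<forall>q\<in>C. p \<noteq> q \<longrightarrow> iv p \<inter> iv q = {})
       \<and> u \<notin> \<Union>(iv ` C) \<and> X = \<Union>(iv ` C) \<union> {u})"

(* xs = (i_1,...,i_{2s}) as a 0-indexed list: xs!k = i_{k+1} *)
definition seqok :: "nat set set \<Rightarrow> nat list \<Rightarrow> bool" where
  "seqok B xs \<longleftrightarrow> even (length xs) \<and> sorted_wrt (<) xs \<and>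
     (let s = length xs div 2 in
        B0 B = {{xs ! (2*s - 1 - k), xs ! k} | k. k < s}
      \<and> (\<forall>k<s. writ (xs ! (2*s - 1 - k)) (xs ! k))
      \<and> (\<forall>j. j + 1 < 2*s \<and> j + 1 \<noteq> s \<longrightarrow> cov0 B {xs ! j + 1 .. xs ! (j+1) - 1}))"

definition iseq :: "nat set set \<Rightarrow> nat list" where
  "iseq B = (THE xs. seqok B xs)"

definition starP :: "nat \<Rightarrow> nat set set \<Rightarrow> bool" where
  "starP N B \<longleftrightarrow> PN N B \<and> (\<forall>p\<in>B1 B. cov0 B {fst (wpair p) + 1 .. snd (wpair p) - 1})
     \<and> (\<exists>xs. seqok B xs)"

definition condI :: "nat \<Rightarrow> nat set set \<Rightarrow> bool" where
  "condI N B \<longleftrightarrow> (let xs = iseq B; s = length xs div 2 in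
     s = 0 \<or> (cov0 B {1 .. hd xs - 1} \<and> cov0 B {last xs + 1 .. N}))"

definition condII :: "nat \<Rightarrow> nat set set \<Rightarrow> bool" where
  "condII N B \<longleftrightarrow> N \<notin> \<Union>B \<and> (let xs = iseq B; s = length xs div 2 in
     s = 0 \<or> (odd s \<and>
       ((cov1 B {1 .. hd xs - 1} \<and> cov0 B {last xs + 1 .. N - 1})
      \<or> (cov0 B {1 .. hd xs - 1} \<and> cov1 B {last xs + 1 .. N - 1}))))"

definition condIII :: "nat \<Rightarrow> nat set set \<Rightarrow> bool" where
  "condIII N B \<longleftrightarrow> condI N B \<and> (let s = length (iseq B) div 2 in
     (even s \<longrightarrow> (\<exists>i. even i \<and> {i, N} \<in> B)) \<and> (odd s \<longrightarrow> (\<exists>i. odd i \<and> {i, N} \<in> B)))"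

definition XP :: "nat \<Rightarrow> nat set set set" where
  "XP N = {B. starP N B \<and> condII N B}"

definition XM :: "nat \<Rightarrow> nat set set set" where
  "XM N = {B. starP N B \<and> condIII N B}"

definition XX :: "nat \<Rightarrow> nat set set set" where
  "XX N = XP N \<union> XM N"

definition X0P' :: "nat \<Rightarrow> nat set set set" where
  "X0P' N = {B \<in> XP N. card (B0 B) = 0 \<and> N - 1 \<notin> \<Union>B}"

definition uB :: "nat \<Rightarrow> nat set set \<Rightarrow> nat" where
  "uB N B = (let xs = iseq B; i1 = hd xs; i2s = last xs in
     if cov1 B {1 .. i1 - 1} \<and> cov0 B {i2s + 1 .. N - 1}
     then (THE u. u \<in> {1 .. i1 - 1} \<and> cov0 B {1 .. u - 1} \<and> cov0 B {u + 1 .. i1 - 1})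
     else (THE u. u \<in> {i2s + 1 .. N - 1} \<and> cov0 B {i2s + 1 .. u - 1} \<and> cov0 B {u + 1 .. N - 1}))"

definition dbr :: "nat \<Rightarrow> nat set \<Rightarrow> nat set" where
  "dbr N p = (let i = fst (wpair p); j = snd (wpair p) in
     if i < j then {i .. j} else {i .. N} \<union> {1 .. j})"

definition eps' :: "nat \<Rightarrow> nat set set \<Rightarrow> nat set" where
  "eps' N B = (let S = xsumI (dbr N) B in
     if B \<in> XM N \<or> card (B0 B) = 0 then S
     else if even (uB N B) then symd S {uB N B .. N}
     else symd (symd S {N}) {1 .. uB N B})"

definition stepR :: "nat \<Rightarrow> nat set set \<Rightarrow> nat set set \<Rightarrow> bool" where
  "stepR N B1' B2' \<longleftrightarrow> B1' \<in> XX N \<and> B2' \<in> XX N \<and> eps' N B1' \<in> spanB B2'"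

definition preceq :: "nat \<Rightarrow> nat set set \<Rightarrow> nat set set \<Rightarrow> bool" where
  "preceq N B' B \<longleftrightarrow> B' \<in> XX N \<and> B \<in> XX N \<and> (stepR N)\<^sup>*\<^sup>* B' B"

end

theory Submission
  imports Defs
begin

lemma card2_MinMax:
  fixes p :: "nat set"
  assumes "card p = 2"
  shows "Min p < Max p \<and> p = {Min p, Max p}"
proof -
  obtain a b where ab: "a \<noteq> b" "p = {a, b}" using assms by (auto simp: card_2_iff)
  show ?thesis
  proof (cases "a < b")
    case True then show ?thesis using ab by auto
  next
    case False then show ?thesis using ab by (auto simp: insert_commute)
  qed
qed

lemma wpair_eq:
  fixes p :: "nat set"
  assumes "card p = 2"
  shows "wpair p = (if odd (Max p - Min p) then (Min p, Max p) else (Max p, Min p))"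
proof -
  have mm: "Min p < Max p" "p = {Min p, Max p}" using card2_MinMax[OF assms] by auto
  define c where "c = (if odd (Max p - Min p) then (Min p, Max p) else (Max p, Min p))"
  have c1: "p = {fst c, snd c} \<and> writ (fst c) (snd c)"
    using mm unfolding c_def writ_def by (cases "odd (Max p - Min p)") (simp_all add: insert_commute)
  have c2: "ij = c" if h: "p = {fst ij, snd ij} \<and> writ (fst ij) (snd ij)" for ij
  proof -
    obtain i j where ij: "ij = (i, j)" by (cases ij)
    have "{i, j} = {Min p, Max p}" using h mm ij by simp
    then have "(i = Min p \<and> j = Max p) \<or> (i = Max p \<and> j = Min p)" by (simp add: doubleton_eq_iff)
    then show ?thesis
    proof
      assume "i = Min p \<and> j = Max p"
      then show ?thesis using h ij mm unfolding c_def writ_def by auto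
    next
      assume "i = Max p \<and> j = Min p"
      then show ?thesis using h ij mm unfolding c_def writ_def by auto
    qed
  qed
  show ?thesis unfolding wpair_def c_def[symmetric] using c1 c2 by (rule the_equality)
qed
lemma PN_pair:
  assumes "PN N C" "p \<in> C"
  shows "card p = 2" "p \<subseteq> {1..N}" "Min p < Max p" "p = {Min p, Max p}" "1 \<le> Min p" "Max p \<le> N"
proof -
  have "\<forall>p\<in>C. p \<subseteq> {1..N} \<and> card p = 2" using assms(1) unfolding PN_def by blast
  then show c: "card p = 2" "p \<subseteq> {1..N}" using assms(2) by blast+
  show m: "Min p < Max p" "p = {Min p, Max p}" using card2_MinMax[OF c(1)] by auto
  have "Min p \<in> p" "Max p \<in> p" using m by blast+
  then show "1 \<le> Min p" "Max p \<le> N" using c(2) by (meson atLeastAtMost_iff subsetD)+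
qed

lemma PN_disj:
  assumes "PN N C" "p \<in> C" "q \<in> C" "x \<in> p" "x \<in> q"
  shows "p = q"
proof -
  have "\<forall>p\<in>C. \<forall>q\<in>C. p \<noteq> q \<longrightarrow> p \<inter> q = {}" using assms(1) unfolding PN_def by blast
  then show ?thesis using assms(2-5) by blast
qed

lemma B1_sub: "B1 C \<subseteq> C" and B0_sub: "B0 C \<subseteq> C"
  unfolding B1_def B0_def by auto

lemma B01: "p \<in> C \<Longrightarrow> p \<in> B0 C \<or> p \<in> B1 C"
  unfolding B1_def B0_def by auto

lemma B01_disj: "p \<in> B0 C \<Longrightarrow> p \<notin> B1 C"
  unfolding B1_def B0_def by auto

lemma B1_wpair:
  assumes "PN N C" "p \<in> B1 C"
  shows "wpair p = (Min p, Max p)" "iv p = {Min p..Max p}" "dbr N p = {Min p..Max p}"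
proof -
  have c: "card p = 2" using PN_pair(1)[OF assms(1)] B1_sub assms(2) by blast
  have o: "odd (Max p - Min p)" using assms(2) unfolding B1_def by auto
  show w: "wpair p = (Min p, Max p)" using wpair_eq[OF c] o by simp
  show "iv p = {Min p..Max p}" unfolding iv_def w by simp
  have "Min p < Max p" using card2_MinMax[OF c] by simp
  then show "dbr N p = {Min p..Max p}" unfolding dbr_def w by (simp add: Let_def)
qed

lemma B0_wpair:
  assumes "PN N C" "p \<in> B0 C"
  shows "wpair p = (Max p, Min p)" "dbr N p = {Max p..N} \<union> {1..Min p}"
proof -
  have c: "card p = 2" using PN_pair(1)[OF assms(1)] B0_sub assms(2) by blast
  have o: "even (Max p - Min p)" using assms(2) unfolding B0_def by auto
  have mm: "Min p < Max p" using card2_MinMax[OF c] by simp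
  have "\<not> odd (Max p - Min p)" using o by simp
  then show w: "wpair p = (Max p, Min p)" using wpair_eq[OF c] by simp
  show "dbr N p = {Max p..N} \<union> {1..Min p}" unfolding dbr_def w using mm by (simp add: Let_def)
qed



lemma PN_finite: "PN N C \<Longrightarrow> finite C" unfolding PN_def by blast

lemma cov0E:
  assumes "cov0 C R"
  obtains T where "T \<subseteq> B1 C" "\<forall>r\<in>T. \<forall>r'\<in>T. r\<noteq>r' \<longrightarrow> iv r \<inter> iv r' = {}" "R = \<Union>(iv ` T)"
proof -
  from assms obtain T where "T \<subseteq> B1 C \<and> (\<forall>r\<in>T. \<forall>r'\<in>T. r\<noteq>r' \<longrightarrow> iv r \<inter> iv r' = {}) \<and> R = \<Union>(iv ` T)"
    unfolding cov0_def by (elim exE) 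
  then show ?thesis using that by (elim conjE)
qed

lemma tile:
  assumes PN: "PN N C" and H: "\<forall>p\<in>B1 C. cov0 C {fst (wpair p) + 1 .. snd (wpair p) - 1}"
  shows "p \<in> B1 C \<Longrightarrow> {Min p..Max p} \<subseteq> \<Union>(B1 C) \<and> (\<forall>q\<in>C. q \<inter> {Min p..Max p} \<noteq> {} \<longrightarrow> q \<subseteq> {Min p..Max p})"
proof (induction "Max p - Min p" arbitrary: p rule: less_induct)
  case less
  have w: "wpair p = (Min p, Max p)" using B1_wpair(1)[OF PN less.prems] .
  have pC: "p \<in> C" using less.prems B1_sub by blast
  have pm: "Min p < Max p" "p = {Min p, Max p}" using PN_pair(3,4)[OF PN pC] by blast+
  have "cov0 C {fst (wpair p) + 1 .. snd (wpair p) - 1}" using H less.prems by (rule bspec)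
  then have "cov0 C {Min p + 1 .. Max p - 1}" unfolding w by simp
  then obtain T where T: "T \<subseteq> B1 C" "\<forall>r\<in>T. \<forall>r'\<in>T. r\<noteq>r' \<longrightarrow> iv r \<inter> iv r' = {}"
      "{Min p + 1..Max p - 1} = \<Union>(iv ` T)" by (rule cov0E)
  have IH: "{Min r..Max r} \<subseteq> \<Union>(B1 C) \<and> (\<forall>q\<in>C. q \<inter> {Min r..Max r} \<noteq> {} \<longrightarrow> q \<subseteq> {Min r..Max r})"
     and sub: "{Min r..Max r} \<subseteq> {Min p + 1..Max p - 1}"
    if r: "r \<in> T" for r
  proof -
    have rB: "r \<in> B1 C" using r T(1) by blast
    have ivr: "iv r = {Min r..Max r}" using B1_wpair(2)[OF PN rB] .
    have rC: "r \<in> C" using rB B1_sub by blast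
    have rm: "Min r < Max r" using PN_pair(3)[OF PN rC] .
    have "iv r \<subseteq> \<Union>(iv ` T)" using r by blast
    then show sub: "{Min r..Max r} \<subseteq> {Min p + 1..Max p - 1}" unfolding T(3)[symmetric] ivr .
    have "Min r \<in> {Min p + 1..Max p - 1}" "Max r \<in> {Min p + 1..Max p - 1}" using sub rm by auto
    then have "Max r - Min r < Max p - Min p" using rm by auto
    from less.hyps[OF this rB]
    show "{Min r..Max r} \<subseteq> \<Union>(B1 C) \<and> (\<forall>q\<in>C. q \<inter> {Min r..Max r} \<noteq> {} \<longrightarrow> q \<subseteq> {Min r..Max r})" .
  qed
  have inT: "\<exists>r\<in>T. x \<in> {Min r..Max r}" if "x \<in> {Min p + 1..Max p - 1}" for x
  proof -
    have "x \<in> \<Union>(iv ` T)" using that unfolding T(3) .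
    then obtain r where r: "r \<in> T" "x \<in> iv r" by blast
    have rB: "r \<in> B1 C" using r T(1) by blast
    show ?thesis using r B1_wpair(2)[OF PN rB] by auto
  qed
  have part1: "{Min p..Max p} \<subseteq> \<Union>(B1 C)"
  proof
    fix x assume x: "x \<in> {Min p..Max p}"
    show "x \<in> \<Union>(B1 C)"
    proof (cases "x = Min p \<or> x = Max p")
      case True
      then have "x \<in> p" using pm by blast
      then show ?thesis using less.prems by blast
    next
      case False
      then have "x \<in> {Min p + 1..Max p - 1}" using x by auto
      then obtain r where "r \<in> T" "x \<in> {Min r..Max r}" using inT by blast
      then show ?thesis using IH by blast
    qed
  qed
  have part2: "q \<subseteq> {Min p..Max p}" if q: "q \<in> C" "q \<inter> {Min p..Max p} \<noteq> {}" for q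
  proof -
    obtain y where y: "y \<in> q" "y \<in> {Min p..Max p}" using q(2) by blast
    show ?thesis
    proof (cases "y = Min p \<or> y = Max p")
      case True
      then have "y \<in> p" using pm by blast
      then have "q = p" using PN_disj[OF PN q(1) pC y(1)] by blast
      then show ?thesis using pm(1) by (subst \<open>q = p\<close>, subst pm(2)) auto
    next
      case False
      then have "y \<in> {Min p + 1..Max p - 1}" using y by auto
      then obtain r where r: "r \<in> T" "y \<in> {Min r..Max r}" using inT by blast
      then have "q \<subseteq> {Min r..Max r}" using IH[OF r(1)] q(1) y(1) by blast
      moreover have "{Min p + 1..Max p - 1} \<subseteq> {Min p..Max p}" by auto
      ultimately show ?thesis using sub[OF r(1)] by blast
    qed
  qed
  show ?case using part1 part2 by blast
qed

lemma cov0_props: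
  assumes PN: "PN N C" and H: "\<forall>p\<in>B1 C. cov0 C {fst (wpair p) + 1 .. snd (wpair p) - 1}"
    and cv: "cov0 C R"
  shows "R \<subseteq> \<Union>(B1 C)" "\<forall>q\<in>C. q \<inter> R \<noteq> {} \<longrightarrow> q \<subseteq> R" "finite R" "even (card R)"
proof -
  obtain T where T: "T \<subseteq> B1 C" "\<forall>r\<in>T. \<forall>r'\<in>T. r\<noteq>r' \<longrightarrow> iv r \<inter> iv r' = {}"
      "R = \<Union>(iv ` T)" using cv by (rule cov0E)
  have ivr: "iv r = {Min r..Max r}" if "r \<in> T" for r using B1_wpair(2)[OF PN] that T(1) by blast
  have tl: "{Min r..Max r} \<subseteq> \<Union>(B1 C) \<and> (\<forall>q\<in>C. q \<inter> {Min r..Max r} \<noteq> {} \<longrightarrow> q \<subseteq> {Min r..Max r})"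
    if "r \<in> T" for r using tile[OF PN H] that T(1) by blast
  show "R \<subseteq> \<Union>(B1 C)"
  proof
    fix x assume "x \<in> R"
    then have "x \<in> \<Union>(iv ` T)" unfolding T(3) .
    then obtain r where r: "r \<in> T" "x \<in> iv r" by blast
    then have "x \<in> {Min r..Max r}" using ivr[OF r(1)] by simp
    then show "x \<in> \<Union>(B1 C)" using tl[OF r(1)] by blast
  qed
  show "\<forall>q\<in>C. q \<inter> R \<noteq> {} \<longrightarrow> q \<subseteq> R"
  proof (intro ballI impI)
    fix q assume q: "q \<in> C" "q \<inter> R \<noteq> {}"
    then have "q \<inter> \<Union>(iv ` T) \<noteq> {}" unfolding T(3) by simp
    then obtain y r where yr: "y \<in> q" "r \<in> T" "y \<in> iv r" by blast
    then have "y \<in> {Min r..Max r}" using ivr[OF yr(2)] by simp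
    then have "q \<subseteq> {Min r..Max r}" using tl[OF yr(2)] q(1) yr(1) by blast
    then have "q \<subseteq> iv r" using ivr[OF yr(2)] by simp
    moreover have "iv r \<subseteq> \<Union>(iv ` T)" using yr(2) by blast
    ultimately show "q \<subseteq> R" unfolding T(3) by blast
  qed
  have "T \<subseteq> C" using T(1) B1_sub by blast
  then have fT: "finite T" using PN_finite[OF PN] by (rule finite_subset)
  have fi: "\<forall>r\<in>T. finite (iv r)" using ivr by simp
  show "finite R" unfolding T(3) using fT fi by blast
  have "card R = (\<Sum>r\<in>T. card (iv r))" unfolding T(3)
    using card_UN_disjoint[OF fT fi T(2)] by simp
  moreover have "even (card (iv r))" if "r \<in> T" for r
  proof -
    have "odd (Max r - Min r)" using that T(1) unfolding B1_def by blast
    moreover have "Min r < Max r" using that T(1) B1_sub PN_pair(3)[OF PN] by blast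
    ultimately show ?thesis using ivr[OF that] by simp
  qed
  ultimately show "even (card R)" by (simp add: dvd_sum)
qed



lemma sw_lt:
  assumes "sorted_wrt (<) (xs::nat list)" "i < length xs" "j < length xs"
  shows "(xs!i < xs!j) = (i < j)" "(xs!i \<le> xs!j) = (i \<le> j)" "(xs!i = xs!j) = (i = j)"
proof -
  have a: "xs!i < xs!j" if "i < j" "j < length xs" for i j using sorted_wrt_nth_less[OF assms(1) that] .
  show "(xs!i < xs!j) = (i < j)" using a[of i j] a[of j i] assms(2,3) by (cases i j rule: linorder_cases) auto
  show "(xs!i \<le> xs!j) = (i \<le> j)" using a[of i j] a[of j i] assms(2,3) by (cases i j rule: linorder_cases) auto
  show "(xs!i = xs!j) = (i = j)" using a[of i j] a[of j i] assms(2,3) by (cases i j rule: linorder_cases) auto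
qed

lemma seq_basic:
  assumes "seqok C xs"
  shows "length xs = 2 * (length xs div 2)" "sorted_wrt (<) xs"
    "B0 C = {{xs!(2*(length xs div 2) - 1 - k), xs!k} | k. k < length xs div 2}"
    "\<forall>j. j + 1 < 2*(length xs div 2) \<and> j + 1 \<noteq> length xs div 2 \<longrightarrow> cov0 C {xs ! j + 1 .. xs ! (j+1) - 1}"
  using assms unfolding seqok_def Let_def by auto

lemma seq_set:
  assumes "seqok C xs"
  shows "set xs = \<Union>(B0 C)"
proof -
  define s where "s = length xs div 2"
  have L: "length xs = 2*s" using seq_basic(1)[OF assms] s_def by simp
  have B0: "B0 C = {{xs!(2*s - 1 - k), xs!k} | k. k < s}" using seq_basic(3)[OF assms] s_def by simp
  show ?thesis
  proof
    show "set xs \<subseteq> \<Union>(B0 C)"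
    proof
      fix y assume "y \<in> set xs"
      then obtain i where i: "i < 2*s" "y = xs!i" using L by (auto simp: in_set_conv_nth)
      show "y \<in> \<Union>(B0 C)"
      proof (cases "i < s")
        case True
        then have "{xs!(2*s - 1 - i), xs!i} \<in> B0 C" unfolding B0 by blast
        then show ?thesis using i by blast
      next
        case False
        define k where "k = 2*s - 1 - i"
        have k: "k < s" "2*s - 1 - k = i" using False i unfolding k_def by auto
        then have "{xs!(2*s - 1 - k), xs!k} \<in> B0 C" unfolding B0 by blast
        then show ?thesis using i k by auto
      qed
    qed
    show "\<Union>(B0 C) \<subseteq> set xs"
    proof
      fix y assume "y \<in> \<Union>(B0 C)"
      then obtain k where k: "k < s" "y \<in> {xs!(2*s - 1 - k), xs!k}" unfolding B0 by blast
      then have "2*s - 1 - k < length xs" "k < length xs" using L by auto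
      then show "y \<in> set xs" using k(2) by auto
    qed
  qed
qed

lemma seq_unique:
  assumes "seqok C xs"
  shows "iseq C = xs"
  unfolding iseq_def
proof (rule the_equality)
  show "seqok C xs" by fact
  fix ys assume "seqok C ys"
  have "set ys = set xs" using seq_set[OF assms] seq_set[OF \<open>seqok C ys\<close>] by simp
  moreover have "sorted ys" "distinct ys" using seq_basic(2)[OF \<open>seqok C ys\<close>] strict_sorted_iff by blast+
  moreover have "sorted xs" "distinct xs" using seq_basic(2)[OF assms] strict_sorted_iff by blast+
  ultimately show "ys = xs" using sorted_distinct_set_unique by blast
qed



context
  fixes N :: nat and C :: "nat set set" and xs :: "nat list" and s :: nat
  assumes PN: "PN N C" and sq: "seqok C xs" and sdef: "s = length xs div 2"
begin

lemma L: "length xs = 2*s" using seq_basic(1)[OF sq] sdef by simp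
lemma srt: "sorted_wrt (<) xs" using seq_basic(2)[OF sq] .
lemma B0eq: "B0 C = (\<lambda>k. {xs!(2*s - 1 - k), xs!k}) ` {..<s}"
  using seq_basic(3)[OF sq] sdef by auto

lemma idx: "k < s \<Longrightarrow> k < 2*s - 1 - k \<and> 2*s - 1 - k < length xs \<and> k < length xs \<and> s \<le> 2*s - 1 - k"
  using L by auto

lemma ord_k: "k < s \<Longrightarrow> xs!k < xs!(2*s - 1 - k)"
  using idx sw_lt(1)[OF srt] by blast

lemma MinMax_k:
  assumes "k < s"
  shows "Min {xs!(2*s - 1 - k), xs!k} = xs!k" "Max {xs!(2*s - 1 - k), xs!k} = xs!(2*s - 1 - k)"
  using ord_k[OF assms] by auto

lemma inj_k: "inj_on (\<lambda>k. {xs!(2*s - 1 - k), xs!k}) {..<s}"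
proof
  fix k k' assume k: "k \<in> {..<s}" "k' \<in> {..<s}" and e: "{xs!(2*s - 1 - k), xs!k} = {xs!(2*s - 1 - k'), xs!k'}"
  have "Min {xs!(2*s - 1 - k), xs!k} = Min {xs!(2*s - 1 - k'), xs!k'}" using e by (rule arg_cong)
  then have "xs!k = xs!k'" using MinMax_k(1)[of k] MinMax_k(1)[of k'] k by simp
  then show "k = k'" using sw_lt(3)[OF srt] idx k by auto
qed

lemma card_B0: "card (B0 C) = s"
  unfolding B0eq using card_image[OF inj_k] by simp

lemma card_B0P: "card {p \<in> B0 C. P p} = card {k. k < s \<and> P {xs!(2*s - 1 - k), xs!k}}"
proof -
  have "{p \<in> B0 C. P p} = (\<lambda>k. {xs!(2*s - 1 - k), xs!k}) ` {k. k < s \<and> P {xs!(2*s - 1 - k), xs!k}}"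
    unfolding B0eq by blast
  moreover have "inj_on (\<lambda>k. {xs!(2*s - 1 - k), xs!k}) {k. k < s \<and> P {xs!(2*s - 1 - k), xs!k}}"
    using inj_k by (rule inj_on_subset) auto
  ultimately show ?thesis using card_image by simp
qed

lemma xs_in_B0: "k < s \<Longrightarrow> {xs!(2*s - 1 - k), xs!k} \<in> B0 C"
  unfolding B0eq by blast

lemma dbr_k:
  assumes "k < s"
  shows "dbr N {xs!(2*s - 1 - k), xs!k} = {xs!(2*s - 1 - k)..N} \<union> {1..xs!k}"
proof -
  have "{xs!(2*s - 1 - k), xs!k} \<in> B0 C" using xs_in_B0 assms by blast
  from B0_wpair(2)[OF PN this] show ?thesis using MinMax_k[OF assms] by simp
qed

lemma set_xs: "set xs = \<Union>(B0 C)" using seq_set[OF sq] .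
lemma iseq_xs: "iseq C = xs" using seq_unique[OF sq] .

lemma xs_in_pair: "k < s \<Longrightarrow> {xs!(2*s - 1 - k), xs!k} \<in> C"
  using xs_in_B0 B0_sub by blast

end


context
  fixes N :: nat and C :: "nat set set" and xs :: "nat list" and s :: nat
  assumes PN: "PN N C" and sq: "seqok C xs" and sdef: "s = length xs div 2"
    and H: "\<forall>p\<in>B1 C. cov0 C {fst (wpair p) + 1 .. snd (wpair p) - 1}"
begin

lemma cnt_nonB1:
  assumes x: "x \<notin> \<Union>(B1 C)" "1 \<le> x" "x \<le> N"
  shows "card {p \<in> C. x \<in> dbr N p} = card {k. k < s \<and> (x \<le> xs!k \<or> xs!(2*s - 1 - k) \<le> x)}"
proof -
  have "{p \<in> C. x \<in> dbr N p} = {p \<in> B0 C. x \<in> dbr N p}"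
  proof (intro equalityI subsetI)
    fix p assume p: "p \<in> {p \<in> C. x \<in> dbr N p}"
    show "p \<in> {p \<in> B0 C. x \<in> dbr N p}"
    proof (cases "p \<in> B1 C")
      case True
      have "{Min p..Max p} \<subseteq> \<Union>(B1 C)" using tile[OF PN H True] by blast
      moreover have "x \<in> {Min p..Max p}" using p B1_wpair(3)[OF PN True] by simp
      ultimately show ?thesis using x(1) by blast
    next
      case False
      then show ?thesis using p B01[of p C] by blast
    qed
  next
    fix p assume "p \<in> {p \<in> B0 C. x \<in> dbr N p}"
    then show "p \<in> {p \<in> C. x \<in> dbr N p}" using B0_sub by blast
  qed
  also have "card \<dots> = card {k. k < s \<and> x \<in> dbr N {xs!(2*s - 1 - k), xs!k}}"
    by (rule card_B0P[OF PN sq sdef])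
  also have "{k. k < s \<and> x \<in> dbr N {xs!(2*s - 1 - k), xs!k}} = {k. k < s \<and> (x \<le> xs!k \<or> xs!(2*s - 1 - k) \<le> x)}"
  proof (intro Collect_cong)
    fix k
    show "(k < s \<and> x \<in> dbr N {xs!(2*s - 1 - k), xs!k}) = (k < s \<and> (x \<le> xs!k \<or> xs!(2*s - 1 - k) \<le> x))"
    proof (cases "k < s")
      case True
      have "x \<in> dbr N {xs!(2*s - 1 - k), xs!k} \<longleftrightarrow> x \<in> {xs!(2*s - 1 - k)..N} \<union> {1..xs!k}"
        using dbr_k[OF PN sq sdef True] by simp
      also have "\<dots> \<longleftrightarrow> (x \<le> xs!k \<or> xs!(2*s - 1 - k) \<le> x)" using x(2,3) by auto
      finally show ?thesis using True by simp
    qed simp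
  qed
  finally show ?thesis .
qed

lemma K_xk:
  assumes "k0 < s"
  shows "{k. k < s \<and> (xs!k0 \<le> xs!k \<or> xs!(2*s - 1 - k) \<le> xs!k0)} = {k0..<s}"
    "{k. k < s \<and> (xs!(2*s - 1 - k0) \<le> xs!k \<or> xs!(2*s - 1 - k) \<le> xs!(2*s - 1 - k0))} = {k0..<s}"
proof -
  have le: "(xs!i \<le> xs!j) = (i \<le> j)" if "i < length xs" "j < length xs" for i j
    using sw_lt(2)[OF srt[OF PN sq sdef] that] .
  have L: "length xs = 2*s" using L[OF PN sq sdef] .
  show "{k. k < s \<and> (xs!k0 \<le> xs!k \<or> xs!(2*s - 1 - k) \<le> xs!k0)} = {k0..<s}"
  proof (intro equalityI subsetI)
    fix k assume "k \<in> {k. k < s \<and> (xs!k0 \<le> xs!k \<or> xs!(2*s - 1 - k) \<le> xs!k0)}"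
    then have k: "k < s" "xs!k0 \<le> xs!k \<or> xs!(2*s - 1 - k) \<le> xs!k0" by auto
    then have "k0 \<le> k \<or> 2*s - 1 - k \<le> k0" using le[of k0 k] le[of "2*s - 1 - k" k0] assms L by auto
    then show "k \<in> {k0..<s}" using k assms by auto
  next
    fix k assume "k \<in> {k0..<s}"
    then have k: "k < s" "k0 \<le> k" by auto
    then have "xs!k0 \<le> xs!k" using le[of k0 k] L by auto
    then show "k \<in> {k. k < s \<and> (xs!k0 \<le> xs!k \<or> xs!(2*s - 1 - k) \<le> xs!k0)}" using k by auto
  qed
  show "{k. k < s \<and> (xs!(2*s - 1 - k0) \<le> xs!k \<or> xs!(2*s - 1 - k) \<le> xs!(2*s - 1 - k0))} = {k0..<s}"
  proof (intro equalityI subsetI)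
    fix k assume "k \<in> {k. k < s \<and> (xs!(2*s - 1 - k0) \<le> xs!k \<or> xs!(2*s - 1 - k) \<le> xs!(2*s - 1 - k0))}"
    then have k: "k < s" "xs!(2*s - 1 - k0) \<le> xs!k \<or> xs!(2*s - 1 - k) \<le> xs!(2*s - 1 - k0)" by auto
    then have "2*s - 1 - k0 \<le> k \<or> 2*s - 1 - k \<le> 2*s - 1 - k0"
      using le[of "2*s - 1 - k0" k] le[of "2*s - 1 - k" "2*s - 1 - k0"] assms L by auto
    then show "k \<in> {k0..<s}" using k assms by auto
  next
    fix k assume "k \<in> {k0..<s}"
    then have k: "k < s" "k0 \<le> k" by auto
    then have "xs!(2*s - 1 - k) \<le> xs!(2*s - 1 - k0)" using le[of "2*s - 1 - k" "2*s - 1 - k0"] L by auto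
    then show "k \<in> {k. k < s \<and> (xs!(2*s - 1 - k0) \<le> xs!k \<or> xs!(2*s - 1 - k) \<le> xs!(2*s - 1 - k0))}" using k by auto
  qed
qed

lemma K_out:
  assumes "x < xs!0 \<or> xs!(2*s - 1) < x" "0 < s"
  shows "{k. k < s \<and> (x \<le> xs!k \<or> xs!(2*s - 1 - k) \<le> x)} = {..<s}"
proof -
  have le: "(xs!i \<le> xs!j) = (i \<le> j)" if "i < length xs" "j < length xs" for i j
    using sw_lt(2)[OF srt[OF PN sq sdef] that] .
  have L: "length xs = 2*s" using L[OF PN sq sdef] .
  have "x \<le> xs!k \<or> xs!(2*s - 1 - k) \<le> x" if "k < s" for k
  proof -
    have "xs!0 \<le> xs!k" "xs!(2*s - 1 - k) \<le> xs!(2*s - 1)" using le[of 0 k] le[of "2*s - 1 - k" "2*s - 1"] that L by auto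
    then show ?thesis using assms(1) by auto
  qed
  then show ?thesis by auto
qed

lemma K_mid:
  assumes "xs!(s - 1) < x" "x < xs!s" "0 < s"
  shows "{k. k < s \<and> (x \<le> xs!k \<or> xs!(2*s - 1 - k) \<le> x)} = {}"
proof -
  have le: "(xs!i \<le> xs!j) = (i \<le> j)" if "i < length xs" "j < length xs" for i j
    using sw_lt(2)[OF srt[OF PN sq sdef] that] .
  have L: "length xs = 2*s" using L[OF PN sq sdef] .
  have "\<not> (x \<le> xs!k \<or> xs!(2*s - 1 - k) \<le> x)" if "k < s" for k
  proof -
    have "xs!k \<le> xs!(s - 1)" "xs!s \<le> xs!(2*s - 1 - k)" using le[of k "s - 1"] le[of s "2*s - 1 - k"] that L by auto
    then show ?thesis using assms by auto
  qed
  then show ?thesis by auto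
qed

lemma par_k:
  "k < s \<Longrightarrow> (even (xs!k) = even (xs!0)) = even k"
proof (induction k)
  case 0 then show ?case by simp
next
  case (Suc k)
  have L: "length xs = 2*s" using L[OF PN sq sdef] .
  have "cov0 C {xs ! k + 1 .. xs ! (k+1) - 1}"
    using seq_basic(4)[OF sq] Suc.prems sdef by auto
  then have ev: "even (card {xs ! k + 1 .. xs ! (k+1) - 1})" using cov0_props(4)[OF PN H] by blast
  have "xs!k < xs!(k+1)" using sw_lt(1)[OF srt[OF PN sq sdef], of k "k+1"] Suc.prems L by auto
  moreover have "card {xs ! k + 1 .. xs ! (k+1) - 1} = xs!(k+1) - xs!k - 1" by simp
  ultimately have od: "odd (xs!(k+1) - xs!k)" using ev by presburger
  define d where "d = xs!(k+1) - xs!k"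
  have dd: "xs!(k+1) = xs!k + d" using \<open>xs!k < xs!(k+1)\<close> unfolding d_def by simp
  have "odd d" using od unfolding d_def .
  then have e1: "even (xs!(Suc k)) = (\<not> even (xs!k))" using dd by simp
  have "(even (xs!k) = even (xs!0)) = even k" using Suc.IH Suc.prems by simp
  moreover have "even (Suc k) = (\<not> even k)" by simp
  ultimately show ?case using e1 by blast
qed

lemma par_pair:
  "k < s \<Longrightarrow> even (xs!(2*s - 1 - k)) = even (xs!k)"
proof -
  assume k: "k < s"
  have "{xs!(2*s - 1 - k), xs!k} \<in> B0 C" using xs_in_B0[OF PN sq sdef k] .
  then have "even (Max {xs!(2*s - 1 - k), xs!k} - Min {xs!(2*s - 1 - k), xs!k})" unfolding B0_def by blast
  then have "even (xs!(2*s - 1 - k) - xs!k)" using MinMax_k[OF PN sq sdef k] by simp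
  moreover have "xs!k < xs!(2*s - 1 - k)" using ord_k[OF PN sq sdef k] .
  ultimately show ?thesis by presburger
qed

end


lemma span_union:
  assumes PN: "PN N B" and X: "X \<in> spanB B"
  shows "\<exists>D \<subseteq> B. X = \<Union>D"
proof -
  obtain D where D: "D \<subseteq> B" "X = xsumI (\<lambda>X. X) D" using X unfolding spanB_def by blast
  have "xsumI (\<lambda>X. X) D = \<Union>D"
  proof (intro equalityI subsetI)
    fix x assume "x \<in> xsumI (\<lambda>X. X) D"
    then have "odd (card {p \<in> D. x \<in> p})" unfolding xsumI_def by simp
    then have "{p \<in> D. x \<in> p} \<noteq> {}" by (metis card.empty even_zero)
    then show "x \<in> \<Union>D" by blast
  next
    fix x assume "x \<in> \<Union>D"
    then obtain p0 where p0: "p0 \<in> D" "x \<in> p0" by blast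
    have "{p \<in> D. x \<in> p} = {p0}"
    proof (intro equalityI subsetI)
      fix p assume "p \<in> {p \<in> D. x \<in> p}"
      then have "p \<in> B" "x \<in> p" using D(1) by auto
      moreover have "p0 \<in> B" using p0 D(1) by blast
      ultimately have "p = p0" using PN_disj[OF PN] p0(2) by blast
      then show "p \<in> {p0}" by simp
    next
      fix p assume "p \<in> {p0}"
      then show "p \<in> {p \<in> D. x \<in> p}" using p0 by simp
    qed
    then show "x \<in> xsumI (\<lambda>X. X) D" unfolding xsumI_def by simp
  qed
  then show ?thesis using D by blast
qed

lemma pair_par:
  fixes p :: "nat set"
  assumes "card p = 2" "odd (Max p - Min p)"
  shows "card (p \<inter> {y. odd y}) = 1" "card (p \<inter> {y. even y}) = 1"
proof -
  define m where "m = Min p"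
  define M where "M = Max p"
  have mm: "m < M" "p = {m, M}" using card2_MinMax[OF assms(1)] unfolding m_def M_def by blast+
  have o: "odd (M - m)" using assms(2) unfolding m_def M_def .
  have "(odd m \<and> even M) \<or> (even m \<and> odd M)" using o mm(1) by presburger
  then have "card (p \<inter> {y. odd y}) = 1 \<and> card (p \<inter> {y. even y}) = 1"
  proof
    assume h: "odd m \<and> even M"
    have "p \<inter> {y. odd y} = {m}" "p \<inter> {y. even y} = {M}" unfolding mm(2) using h by auto
    then show ?thesis by simp
  next
    assume h: "even m \<and> odd M"
    have "p \<inter> {y. odd y} = {M}" "p \<inter> {y. even y} = {m}" unfolding mm(2) using h by auto
    then show ?thesis by simp
  qed
  then show "card (p \<inter> {y. odd y}) = 1" "card (p \<inter> {y. even y}) = 1" by blast+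
qed

lemma balance:
  fixes D :: "nat set set"
  assumes fD: "finite D" and dj: "\<forall>p\<in>D. \<forall>q\<in>D. p \<noteq> q \<longrightarrow> p \<inter> q = {}"
    and pr: "\<forall>p\<in>D. card p = 2 \<and> odd (Max p - Min p)"
  shows "card (\<Union>D \<inter> {y. odd y}) = card D" "card (\<Union>D \<inter> {y. even y}) = card D"
proof -
  have fin: "\<forall>p\<in>D. finite p"
  proof
    fix p assume "p \<in> D"
    then have "card p = 2" using pr by blast
    then show "finite p" by (intro card_ge_0_finite) simp
  qed
  have e1: "\<Union>D \<inter> {y. odd y} = (\<Union>p\<in>D. p \<inter> {y. odd y})" by blast
  have "card (\<Union>D \<inter> {y. odd y}) = card (\<Union>p\<in>D. p \<inter> {y. odd y})" using e1 by (rule arg_cong)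
  also have "\<dots> = (\<Sum>p\<in>D. card (p \<inter> {y. odd y}))"
  proof (rule card_UN_disjoint[OF fD])
    show "\<forall>p\<in>D. finite (p \<inter> {y. odd y})" using fin by simp
    show "\<forall>p\<in>D. \<forall>q\<in>D. p \<noteq> q \<longrightarrow> (p \<inter> {y. odd y}) \<inter> (q \<inter> {y. odd y}) = {}" using dj by blast
  qed
  also have "\<dots> = (\<Sum>p\<in>D. 1)"
  proof (rule sum.cong)
    fix p assume "p \<in> D"
    then have "card p = 2" "odd (Max p - Min p)" using pr by blast+
    then show "card (p \<inter> {y. odd y}) = 1" by (rule pair_par(1))
  qed simp
  also have "\<dots> = card D" by simp
  finally show "card (\<Union>D \<inter> {y. odd y}) = card D" .
  have e2: "\<Union>D \<inter> {y. even y} = (\<Union>p\<in>D. p \<inter> {y. even y})" by blast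
  have "card (\<Union>D \<inter> {y. even y}) = card (\<Union>p\<in>D. p \<inter> {y. even y})" using e2 by (rule arg_cong)
  also have "\<dots> = (\<Sum>p\<in>D. card (p \<inter> {y. even y}))"
  proof (rule card_UN_disjoint[OF fD])
    show "\<forall>p\<in>D. finite (p \<inter> {y. even y})" using fin by simp
    show "\<forall>p\<in>D. \<forall>q\<in>D. p \<noteq> q \<longrightarrow> (p \<inter> {y. even y}) \<inter> (q \<inter> {y. even y}) = {}" using dj by blast
  qed
  also have "\<dots> = (\<Sum>p\<in>D. 1)"
  proof (rule sum.cong)
    fix p assume "p \<in> D"
    then have "card p = 2" "odd (Max p - Min p)" using pr by blast+
    then show "card (p \<inter> {y. even y}) = 1" by (rule pair_par(2))
  qed simp
  also have "\<dots> = card D" by simp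
  finally show "card (\<Union>D \<inter> {y. even y}) = card D" .
qed



lemma cov1E:
  assumes "cov1 C R"
  obtains T w where "T \<subseteq> B1 C" "\<forall>r\<in>T. \<forall>r'\<in>T. r\<noteq>r' \<longrightarrow> iv r \<inter> iv r' = {}"
    "w \<notin> \<Union>(iv ` T)" "R = \<Union>(iv ` T) \<union> {w}"
proof -
  from assms obtain T w where "T \<subseteq> B1 C \<and> (\<forall>r\<in>T. \<forall>r'\<in>T. r\<noteq>r' \<longrightarrow> iv r \<inter> iv r' = {})
       \<and> w \<notin> \<Union>(iv ` T) \<and> R = \<Union>(iv ` T) \<union> {w}"
    unfolding cov1_def by (elim exE)
  then show ?thesis using that by (elim conjE)
qed

lemma cov0I:
  assumes "T \<subseteq> B1 C" "\<forall>r\<in>T. \<forall>r'\<in>T. r\<noteq>r' \<longrightarrow> iv r \<inter> iv r' = {}" "R = \<Union>(iv ` T)"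
  shows "cov0 C R"
  unfolding cov0_def using assms by blast

lemma ex_u:
  assumes PN: "PN N C" and cv: "cov1 C {lo..hi}" and lo1: "1 \<le> lo"
  shows "\<exists>u. u \<in> {lo..hi} \<and> cov0 C {lo..u - 1} \<and> cov0 C {u + 1..hi}"
proof -
  obtain T w where T: "T \<subseteq> B1 C" "\<forall>r\<in>T. \<forall>r'\<in>T. r\<noteq>r' \<longrightarrow> iv r \<inter> iv r' = {}"
    "w \<notin> \<Union>(iv ` T)" "{lo..hi} = \<Union>(iv ` T) \<union> {w}" using cv by (rule cov1E)
  have ivr: "iv r = {Min r..Max r}" if "r \<in> T" for r using B1_wpair(2)[OF PN] that T(1) by blast
  have w: "w \<in> {lo..hi}" unfolding T(4) by blast
  have sub: "iv r \<subseteq> {lo..hi}" if "r \<in> T" for r unfolding T(4) using that by blast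
  have side: "Max r < w \<or> w < Min r" if r: "r \<in> T" for r
  proof -
    have "w \<notin> iv r" using T(3) r by blast
    then show ?thesis using ivr[OF r] by auto
  qed
  have inT: "\<exists>r\<in>T. x \<in> iv r" if "x \<in> {lo..hi}" "x \<noteq> w" for x
  proof -
    have "x \<in> \<Union>(iv ` T) \<union> {w}" using that(1) unfolding T(4) .
    then show ?thesis using that(2) by blast
  qed
  define T1 where "T1 = {r \<in> T. Max r < w}"
  define T2 where "T2 = {r \<in> T. w < Min r}"
  have c1: "cov0 C {lo..w - 1}"
  proof (rule cov0I)
    show "T1 \<subseteq> B1 C" using T(1) unfolding T1_def by blast
    show "\<forall>r\<in>T1. \<forall>r'\<in>T1. r\<noteq>r' \<longrightarrow> iv r \<inter> iv r' = {}" using T(2) unfolding T1_def by blast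
    show "{lo..w - 1} = \<Union>(iv ` T1)"
    proof (intro equalityI subsetI)
      fix x assume x: "x \<in> {lo..w - 1}"
      then have "x \<in> {lo..hi}" "x \<noteq> w" using w lo1 by auto
      then obtain r where r: "r \<in> T" "x \<in> iv r" using inT by blast
      have "\<not> w < Min r" using r x ivr[OF r(1)] by auto
      then have "r \<in> T1" using side[OF r(1)] r(1) unfolding T1_def by blast
      then show "x \<in> \<Union>(iv ` T1)" using r(2) by blast
    next
      fix x assume "x \<in> \<Union>(iv ` T1)"
      then obtain r where r: "r \<in> T1" "x \<in> iv r" by blast
      have rT: "r \<in> T" "Max r < w" using r(1) unfolding T1_def by auto
      have "x \<in> {lo..hi}" using sub[OF rT(1)] r(2) by blast
      moreover have "x \<le> Max r" using r(2) ivr[OF rT(1)] by simp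
      ultimately show "x \<in> {lo..w - 1}" using rT(2) by auto
    qed
  qed
  have c2: "cov0 C {w + 1..hi}"
  proof (rule cov0I)
    show "T2 \<subseteq> B1 C" using T(1) unfolding T2_def by blast
    show "\<forall>r\<in>T2. \<forall>r'\<in>T2. r\<noteq>r' \<longrightarrow> iv r \<inter> iv r' = {}" using T(2) unfolding T2_def by blast
    show "{w + 1..hi} = \<Union>(iv ` T2)"
    proof (intro equalityI subsetI)
      fix x assume x: "x \<in> {w + 1..hi}"
      then have "x \<in> {lo..hi}" "x \<noteq> w" using w by auto
      then obtain r where r: "r \<in> T" "x \<in> iv r" using inT by blast
      have "\<not> Max r < w" using r x ivr[OF r(1)] by auto
      then have "r \<in> T2" using side[OF r(1)] r(1) unfolding T2_def by blast
      then show "x \<in> \<Union>(iv ` T2)" using r(2) by blast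
    next
      fix x assume "x \<in> \<Union>(iv ` T2)"
      then obtain r where r: "r \<in> T2" "x \<in> iv r" by blast
      have rT: "r \<in> T" "w < Min r" using r(1) unfolding T2_def by auto
      have "x \<in> {lo..hi}" using sub[OF rT(1)] r(2) by blast
      moreover have "Min r \<le> x" using r(2) ivr[OF rT(1)] by simp
      ultimately show "x \<in> {w + 1..hi}" using rT(2) by auto
    qed
  qed
  show ?thesis using w c1 c2 by blast
qed

lemma uncov:
  assumes PN: "PN N C" and H: "\<forall>p\<in>B1 C. cov0 C {fst (wpair p) + 1 .. snd (wpair p) - 1}"
    and lo1: "1 \<le> lo" and u: "u \<in> {lo..hi}" and c1: "cov0 C {lo..u - 1}" and c2: "cov0 C {u + 1..hi}"
    and blo: "lo - 1 \<notin> \<Union>(B1 C) \<or> lo = 0" and bhi: "hi + 1 \<notin> \<Union>(B1 C)"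
    and nb0: "u \<notin> \<Union>(B0 C)"
  shows "u \<notin> \<Union>C"
proof
  assume "u \<in> \<Union>C"
  then obtain q where q: "q \<in> C" "u \<in> q" by blast
  have qB1: "q \<in> B1 C" using q nb0 B01[of q C] by blast
  have mm: "Min q < Max q" "q = {Min q, Max q}" using PN_pair(3,4)[OF PN q(1)] by blast+
  have tl: "{Min q..Max q} \<subseteq> \<Union>(B1 C)" using tile[OF PN H qB1] by blast
  have cl1: "\<forall>q'\<in>C. q' \<inter> {lo..u - 1} \<noteq> {} \<longrightarrow> q' \<subseteq> {lo..u - 1}" using cov0_props(2)[OF PN H c1] .
  have cl2: "\<forall>q'\<in>C. q' \<inter> {u + 1..hi} \<noteq> {} \<longrightarrow> q' \<subseteq> {u + 1..hi}" using cov0_props(2)[OF PN H c2] .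
  have "u = Min q \<or> u = Max q" using q(2) mm(2) by blast
  then show False
  proof
    assume um: "u = Min q"
    have Mq: "Max q \<in> q" using mm(2) by blast
    show False
    proof (cases "Max q \<le> hi")
      case True
      then have "Max q \<in> {u + 1..hi}" using um mm(1) by auto
      then have "q \<subseteq> {u + 1..hi}" using cl2 q(1) Mq by blast
      then show False using q(2) by auto
    next
      case False
      then have "hi + 1 \<in> {Min q..Max q}" using um u mm(1) by auto
      then show False using tl bhi by blast
    qed
  next
    assume um: "u = Max q"
    have mq: "Min q \<in> q" using mm(2) by blast
    show False
    proof (cases "lo \<le> Min q")
      case True
      then have "Min q \<in> {lo..u - 1}" using um mm(1) by auto
      then have "q \<subseteq> {lo..u - 1}" using cl1 q(1) mq by blast
      moreover have "Max q \<in> q" using mm(2) by blast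
      ultimately have "Max q \<in> {lo..u - 1}" by blast
      then show False using um u lo1 by auto
    next
      case False
      then have "lo - 1 \<in> {Min q..Max q}" "lo \<noteq> 0" using um u mm(1) by auto
      then show False using tl blo by blast
    qed
  qed
qed

lemma u_unique:
  assumes PN: "PN N C" and H: "\<forall>p\<in>B1 C. cov0 C {fst (wpair p) + 1 .. snd (wpair p) - 1}"
    and lo1: "1 \<le> lo" and blo: "lo - 1 \<notin> \<Union>(B1 C) \<or> lo = 0" and bhi: "hi + 1 \<notin> \<Union>(B1 C)"
    and nb0: "\<forall>x\<in>{lo..hi}. x \<notin> \<Union>(B0 C)"
    and P: "\<And>u. P u \<longleftrightarrow> u \<in> {lo..hi} \<and> cov0 C {lo..u - 1} \<and> cov0 C {u + 1..hi}"
    and u: "P u" and v: "P v"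
  shows "u = v"
proof (rule ccontr)
  assume ne: "u \<noteq> v"
  have un: "x \<notin> \<Union>C" if "P x" for x
    using that P[of x] uncov[OF PN H lo1 _ _ _ blo bhi, of x] nb0 by blast
  have B1C: "\<Union>(B1 C) \<subseteq> \<Union>C" using B1_sub by blast
  show False
  proof (cases "u < v")
    case True
    have "u \<in> {lo..v - 1}" using True u v P by auto
    moreover have "{lo..v - 1} \<subseteq> \<Union>(B1 C)" using cov0_props(1)[OF PN H] v P by blast
    ultimately show False using un[OF u] B1C by blast
  next
    case False
    then have "v < u" using ne by auto
    have "v \<in> {lo..u - 1}" using \<open>v < u\<close> u v P by auto
    moreover have "{lo..u - 1} \<subseteq> \<Union>(B1 C)" using cov0_props(1)[OF PN H] u P by blast
    ultimately show False using un[OF v] B1C by blast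
  qed
qed



lemma dbr_bounds:
  assumes PN: "PN N C" and p: "p \<in> C"
  shows "dbr N p \<subseteq> {1..N}"
proof (cases "p \<in> B1 C")
  case True
  then show ?thesis using B1_wpair(3)[OF PN True] PN_pair(5,6)[OF PN p] by auto
next
  case False
  then have "p \<in> B0 C" using B01[OF p] by blast
  have "Min p < Max p" "1 \<le> Min p" "Max p \<le> N" using PN_pair(3,5,6)[OF PN p] by auto
  then show ?thesis unfolding B0_wpair(2)[OF PN \<open>p \<in> B0 C\<close>] by auto
qed

lemma mem_MinMax:
  fixes p :: "nat set"
  assumes "card p = 2" "x \<in> p"
  shows "Min p \<le> x" "x \<le> Max p"
proof -
  have "finite p" using assms(1) by (intro card_ge_0_finite) simp
  then show "Min p \<le> x" "x \<le> Max p" using assms(2) by (rule Min_le, rule Max_ge)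
qed

lemma xsum_mem: "x \<in> xsumI f C \<longleftrightarrow> odd (card {p \<in> C. x \<in> f p})"
  unfolding xsumI_def by simp

lemma symd_mem: "x \<in> symd X Y \<longleftrightarrow> (x \<in> X) \<noteq> (x \<in> Y)"
  unfolding symd_def by auto

lemma starP_seq:
  assumes "starP N C"
  obtains xs where "seqok C xs"
  using assms unfolding starP_def by blast

lemma starP_H:
  assumes "starP N C"
  shows "PN N C" "\<forall>p\<in>B1 C. cov0 C {fst (wpair p) + 1 .. snd (wpair p) - 1}"
  using assms unfolding starP_def by blast+

lemma caseA:
  assumes oN: "odd N" and CM: "C \<in> XM N"
  shows "N \<in> eps' N C"
proof -
  have st: "starP N C" and c3: "condIII N C" using CM unfolding XM_def by auto
  have PN: "PN N C" using starP_H(1)[OF st] .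
  obtain xs where sq: "seqok C xs" using st by (rule starP_seq)
  define s where "s = length xs div 2"
  have ix: "iseq C = xs" using iseq_xs[OF PN sq s_def] .
  have cB0: "card (B0 C) = s" using card_B0[OF PN sq s_def] .
  have fC: "finite C" using PN_finite[OF PN] .
  have e: "eps' N C = xsumI (dbr N) C" unfolding eps'_def using CM by (simp add: Let_def)
  have set: "{p \<in> C. N \<in> dbr N p} = B0 C \<union> {p \<in> B1 C. N \<in> p}"
  proof (intro equalityI subsetI)
    fix p assume "p \<in> {p \<in> C. N \<in> dbr N p}"
    then have p: "p \<in> C" "N \<in> dbr N p" by auto
    show "p \<in> B0 C \<union> {p \<in> B1 C. N \<in> p}"
    proof (cases "p \<in> B1 C")
      case True
      have "N \<le> Max p" using p(2) B1_wpair(3)[OF PN True] by simp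
      then have "Max p = N" using PN_pair(6)[OF PN p(1)] by simp
      moreover have "Max p \<in> p" using PN_pair(4)[OF PN p(1)] by blast
      ultimately show ?thesis using True by auto
    next
      case False
      then show ?thesis using B01[OF p(1)] by blast
    qed
  next
    fix p assume p: "p \<in> B0 C \<union> {p \<in> B1 C. N \<in> p}"
    show "p \<in> {p \<in> C. N \<in> dbr N p}"
    proof (cases "p \<in> B0 C")
      case True
      have pC: "p \<in> C" using True B0_sub by blast
      have "Max p \<le> N" using PN_pair(6)[OF PN pC] .
      then show ?thesis using B0_wpair(2)[OF PN True] pC by auto
    next
      case False
      then have pB: "p \<in> B1 C" "N \<in> p" using p by auto
      have pC: "p \<in> C" using pB B1_sub by blast
      have "Min p \<le> N" "N \<le> Max p" using mem_MinMax[OF PN_pair(1)[OF PN pC] pB(2)] by auto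
      then show ?thesis using B1_wpair(3)[OF PN pB(1)] pC by auto
    qed
  qed
  have fB0: "finite (B0 C)" using fC B0_sub finite_subset by blast
  have fB1: "finite {p \<in> B1 C. N \<in> p}" using fC B1_sub finite_subset by (metis (no_types, lifting) mem_Collect_eq subsetI)
  have dj: "B0 C \<inter> {p \<in> B1 C. N \<in> p} = {}" using B01_disj by blast
  have cnt: "card {p \<in> C. N \<in> dbr N p} = s + card {p \<in> B1 C. N \<in> p}"
    unfolding set using card_Un_disjoint[OF fB0 fB1 dj] cB0 by simp
  have c3': "(even s \<longrightarrow> (\<exists>i. even i \<and> {i, N} \<in> C)) \<and> (odd s \<longrightarrow> (\<exists>i. odd i \<and> {i, N} \<in> C))"
    using c3 unfolding condIII_def ix s_def by (simp add: Let_def)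
  have "odd (card {p \<in> C. N \<in> dbr N p})"
  proof (cases "even s")
    case True
    then obtain i where i: "even i" "{i, N} \<in> C" using c3' by blast
    have iN: "i \<noteq> N" using i(1) oN by auto
    have "i \<le> N" using PN_pair(2)[OF PN i(2)] by auto
    then have il: "i < N" using iN by simp
    have "Min {i, N} = i" "Max {i, N} = N" using il by auto
    then have md: "Max {i, N} - Min {i, N} = N - i" by simp
    have "odd (N - i)" using i(1) oN il by presburger
    then have "odd (Max {i, N} - Min {i, N})" unfolding md .
    then have p0: "{i, N} \<in> B1 C" using i(2) unfolding B1_def by blast
    have e1: "{p \<in> B1 C. N \<in> p} = {{i, N}}"
    proof (intro equalityI subsetI)
      fix p assume "p \<in> {p \<in> B1 C. N \<in> p}"
      then have "p \<in> C" "N \<in> p" using B1_sub by auto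
      then have "p = {i, N}" using PN_disj[OF PN _ i(2)] by blast
      then show "p \<in> {{i, N}}" by simp
    next
      fix p assume "p \<in> {{i, N}}"
      then show "p \<in> {p \<in> B1 C. N \<in> p}" using p0 by simp
    qed
    have "card {p \<in> B1 C. N \<in> p} = 1" unfolding e1 by simp
    then show ?thesis using cnt True by simp
  next
    case False
    then obtain i where i: "odd i" "{i, N} \<in> C" using c3' by blast
    have "card {i, N} = 2" using PN_pair(1)[OF PN i(2)] .
    have iN: "i \<noteq> N"
    proof
      assume "i = N"
      then have "card {i, N} = 1" by simp
      then show False using \<open>card {i, N} = 2\<close> by simp
    qed
    have "i \<le> N" using PN_pair(2)[OF PN i(2)] by auto
    then have il: "i < N" using iN by simp
    have "Min {i, N} = i" "Max {i, N} = N" using il by auto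
    then have md: "Max {i, N} - Min {i, N} = N - i" by simp
    have "even (N - i)" using i(1) oN il by presburger
    then have "even (Max {i, N} - Min {i, N})" unfolding md .
    then have p0: "{i, N} \<in> B0 C" using i(2) unfolding B0_def by blast
    have e0: "{p \<in> B1 C. N \<in> p} = {}"
    proof (intro equalityI subsetI)
      fix p assume p: "p \<in> {p \<in> B1 C. N \<in> p}"
      then have "p \<in> C" "N \<in> p" using B1_sub by auto
      then have "p = {i, N}" using PN_disj[OF PN _ i(2)] by blast
      then show "p \<in> {}" using p p0 B01_disj by blast
    qed simp
    have "card {p \<in> B1 C. N \<in> p} = 0" unfolding e0 by simp
    then show ?thesis using cnt False by simp
  qed
  then show ?thesis unfolding e xsum_mem .
qed

lemma caseB:
  assumes N3: "N \<ge> 3" and PN: "PN N C" and b0: "card (B0 C) = 0" and nN: "N \<notin> \<Union>C"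
    and nN1: "N - 1 \<in> \<Union>C"
  shows "N - 1 \<in> eps' N C"
proof -
  have fC: "finite C" using PN_finite[OF PN] .
  have fB0: "finite (B0 C)" using fC B0_sub finite_subset by blast
  have B0e: "B0 C = {}" using b0 fB0 by simp
  have e: "eps' N C = xsumI (dbr N) C" unfolding eps'_def using b0 by (simp add: Let_def)
  obtain p0 where p0: "p0 \<in> C" "N - 1 \<in> p0" using nN1 by blast
  have allB1: "p \<in> B1 C" if "p \<in> C" for p using B01[OF that] B0e by blast
  have "{p \<in> C. N - 1 \<in> dbr N p} = {p0}"
  proof (intro equalityI subsetI)
    fix p assume "p \<in> {p \<in> C. N - 1 \<in> dbr N p}"
    then have p: "p \<in> C" "N - 1 \<in> dbr N p" by auto
    have "N - 1 \<le> Max p" using p(2) B1_wpair(3)[OF PN allB1[OF p(1)]] by simp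
    moreover have "Max p \<le> N" using PN_pair(6)[OF PN p(1)] .
    moreover have Mp: "Max p \<in> p" using PN_pair(4)[OF PN p(1)] by blast
    moreover have "Max p \<noteq> N" using nN Mp p(1) by blast
    ultimately have "Max p = N - 1" by linarith
    then have "N - 1 \<in> p" using Mp by simp
    then have "p = p0" using PN_disj[OF PN p(1) p0(1) _ p0(2)] by blast
    then show "p \<in> {p0}" by simp
  next
    fix p assume "p \<in> {p0}"
    then have pp: "p = p0" by simp
    have "Min p0 \<le> N - 1" "N - 1 \<le> Max p0" using mem_MinMax[OF PN_pair(1)[OF PN p0(1)] p0(2)] by auto
    then show "p \<in> {p \<in> C. N - 1 \<in> dbr N p}" using B1_wpair(3)[OF PN allB1[OF p0(1)]] p0(1) pp by auto
  qed
  then show ?thesis unfolding e xsum_mem by simp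
qed



lemma xs_bounds:
  assumes PN: "PN N C" and sq: "seqok C xs" and sdef: "s = length xs div 2" and i: "i < length xs"
  shows "xs!0 \<le> xs!i" "xs!i \<le> xs!(2*s - 1)" "1 \<le> xs!i" "xs!i \<le> N" "xs!i \<notin> \<Union>(B1 C)" "xs!i \<in> \<Union>(B0 C)"
proof -
  have L: "length xs = 2*s" using L[OF PN sq sdef] .
  have srt: "sorted_wrt (<) xs" using srt[OF PN sq sdef] .
  have l0: "0 < length xs" using i by linarith
  show "xs!0 \<le> xs!i" using sw_lt(2)[OF srt l0 i] by simp
  show "xs!i \<le> xs!(2*s - 1)" using sw_lt(2)[OF srt i, of "2*s - 1"] i L by simp
  have x0: "xs!i \<in> \<Union>(B0 C)" using set_xs[OF PN sq sdef] i by (metis nth_mem)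
  then show "xs!i \<in> \<Union>(B0 C)" .
  then obtain q where q: "q \<in> B0 C" "xs!i \<in> q" by blast
  have qC: "q \<in> C" using q(1) B0_sub by blast
  show "1 \<le> xs!i" "xs!i \<le> N" using PN_pair(2)[OF PN qC] q(2) by auto
  show "xs!i \<notin> \<Union>(B1 C)"
  proof
    assume "xs!i \<in> \<Union>(B1 C)"
    then obtain r where r: "r \<in> B1 C" "xs!i \<in> r" by blast
    have "r \<in> C" using r(1) B1_sub by blast
    then have "r = q" using PN_disj[OF PN _ qC r(2) q(2)] by blast
    then show False using r(1) q(1) B01_disj by blast
  qed
qed

lemma B0_in_xs:
  assumes PN: "PN N C" and sq: "seqok C xs" and sdef: "s = length xs div 2" and x: "x \<in> \<Union>(B0 C)"
  shows "xs!0 \<le> x" "x \<le> xs!(2*s - 1)"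
proof -
  have "x \<in> set xs" using set_xs[OF PN sq sdef] x by simp
  then obtain i where "i < length xs" "x = xs!i" by (auto simp: in_set_conv_nth)
  then show "xs!0 \<le> x" "x \<le> xs!(2*s - 1)" using xs_bounds[OF PN sq sdef] by auto
qed

lemma zero_notB1:
  assumes PN: "PN N C"
  shows "0 \<notin> \<Union>(B1 C)"
proof
  assume "0 \<in> \<Union>(B1 C)"
  then obtain r where "r \<in> B1 C" "0 \<in> r" by blast
  then show False using PN_pair(2)[OF PN] B1_sub by fastforce
qed

lemma u_props:
  assumes oN: "odd N" and N3: "N \<ge> 3" and CP: "C \<in> XP N"
    and sq: "seqok C xs" and sdef: "s = length xs div 2" and s0: "0 < s"
  shows "uB N C \<notin> \<Union>C \<and> 1 \<le> uB N C \<and> uB N C \<le> N - 1 \<and>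
    ((odd (uB N C) \<and> uB N C < xs!0 \<and> cov0 C {1..uB N C - 1} \<and> cov0 C {uB N C + 1..xs!0 - 1} \<and> cov0 C {xs!(2*s - 1) + 1..N - 1})
   \<or> (even (uB N C) \<and> xs!(2*s - 1) < uB N C \<and> cov0 C {1..xs!0 - 1} \<and> cov0 C {xs!(2*s - 1) + 1..uB N C - 1} \<and> cov0 C {uB N C + 1..N - 1}))"
proof -
  have st: "starP N C" and c2: "condII N C" using CP unfolding XP_def by auto
  have PN: "PN N C" and H: "\<forall>p\<in>B1 C. cov0 C {fst (wpair p) + 1 .. snd (wpair p) - 1}" using starP_H[OF st] by auto
  have L: "length xs = 2*s" using L[OF PN sq sdef] .
  have ix: "iseq C = xs" using iseq_xs[OF PN sq sdef] .
  have ne: "xs \<noteq> []" using L s0 by auto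
  have hd: "hd xs = xs!0" using ne by (simp add: hd_conv_nth)
  have lst: "last xs = xs!(2*s - 1)" using ne L by (simp add: last_conv_nth)
  define a where "a = xs!0"
  define z where "z = xs!(2*s - 1)"
  have a1: "1 \<le> a" "a \<le> N" "a \<notin> \<Union>(B1 C)" using xs_bounds[OF PN sq sdef, of 0] L s0 unfolding a_def by auto
  have z1: "1 \<le> z" "z \<le> N" "z \<notin> \<Union>(B1 C)" using xs_bounds[OF PN sq sdef, of "2*s - 1"] L s0 unfolding z_def by auto
  have nN: "N \<notin> \<Union>C" using c2 unfolding condII_def by simp
  have zN: "z < N"
  proof -
    have "z \<in> \<Union>(B0 C)" using xs_bounds(6)[OF PN sq sdef, of "2*s - 1"] L s0 unfolding z_def by auto
    then have "z \<in> \<Union>C" using B0_sub by blast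
    then show ?thesis using nN z1(2) by (cases "z = N") auto
  qed
  have nB1N: "N \<notin> \<Union>(B1 C)" using nN B1_sub by blast
  have cs: "odd s \<and> ((cov1 C {1 .. a - 1} \<and> cov0 C {z + 1 .. N - 1}) \<or> (cov0 C {1 .. a - 1} \<and> cov1 C {z + 1 .. N - 1}))"
    using c2 s0 unfolding condII_def ix Let_def hd lst a_def z_def sdef[symmetric] by auto
  have uBeq: "uB N C = (if cov1 C {1 .. a - 1} \<and> cov0 C {z + 1 .. N - 1}
     then (THE u. u \<in> {1 .. a - 1} \<and> cov0 C {1 .. u - 1} \<and> cov0 C {u + 1 .. a - 1})
     else (THE u. u \<in> {z + 1 .. N - 1} \<and> cov0 C {z + 1 .. u - 1} \<and> cov0 C {u + 1 .. N - 1}))"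
    unfolding uB_def ix Let_def hd lst a_def z_def by simp
  show ?thesis
  proof (cases "cov1 C {1 .. a - 1} \<and> cov0 C {z + 1 .. N - 1}")
    case True
    define P where "P u \<longleftrightarrow> u \<in> {1 .. a - 1} \<and> cov0 C {1 .. u - 1} \<and> cov0 C {u + 1 .. a - 1}" for u
    have ue: "uB N C = (THE u. P u)" unfolding P_def uBeq using True by (rule if_P)
    have ex: "\<exists>u. P u" using ex_u[OF PN _, of 1 "a - 1"] True unfolding P_def by auto
    have blo: "1 - 1 \<notin> \<Union>(B1 C) \<or> (1::nat) = 0" using zero_notB1[OF PN] by simp
    have bhi: "a - 1 + 1 \<notin> \<Union>(B1 C)" using a1 by simp
    have nb0: "\<forall>x\<in>{1..a - 1}. x \<notin> \<Union>(B0 C)"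
    proof
      fix x assume x: "x \<in> {1..a - 1}"
      show "x \<notin> \<Union>(B0 C)"
      proof
        assume "x \<in> \<Union>(B0 C)"
        then have "a \<le> x" using B0_in_xs(1)[OF PN sq sdef] unfolding a_def by blast
        then show False using x a1 by auto
      qed
    qed
    have uq: "\<And>u v. P u \<Longrightarrow> P v \<Longrightarrow> u = v"
      using u_unique[OF PN H _ blo bhi nb0, of P] unfolding P_def by blast
    have Pu: "P (uB N C)" unfolding ue using ex uq by (metis theI)
    then have u: "uB N C \<in> {1 .. a - 1}" "cov0 C {1 .. uB N C - 1}" "cov0 C {uB N C + 1 .. a - 1}" unfolding P_def by auto
    have un: "uB N C \<notin> \<Union>C"
    proof (rule uncov[OF PN H _ u blo bhi])
      show "uB N C \<notin> \<Union>(B0 C)" using nb0 u(1) by blast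
    qed simp
    have "even (card {1 .. uB N C - 1})" using cov0_props(4)[OF PN H u(2)] .
    then have "odd (uB N C)" using u(1) by auto
    then show ?thesis using un u True a1 unfolding a_def z_def by auto
  next
    case False
    then have cc: "cov0 C {1 .. a - 1}" "cov1 C {z + 1 .. N - 1}" using cs by auto
    define P where "P u \<longleftrightarrow> u \<in> {z + 1 .. N - 1} \<and> cov0 C {z + 1 .. u - 1} \<and> cov0 C {u + 1 .. N - 1}" for u
    have ue: "uB N C = (THE u. P u)" unfolding P_def uBeq using False by (rule if_not_P)
    have ex: "\<exists>u. P u" using ex_u[OF PN cc(2)] unfolding P_def by auto
    have blo: "z + 1 - 1 \<notin> \<Union>(B1 C) \<or> z + 1 = 0" using z1 by simp
    have bhi: "N - 1 + 1 \<notin> \<Union>(B1 C)" using nB1N N3 by simp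
    have nb0: "\<forall>x\<in>{z + 1..N - 1}. x \<notin> \<Union>(B0 C)"
    proof
      fix x assume x: "x \<in> {z + 1..N - 1}"
      show "x \<notin> \<Union>(B0 C)"
      proof
        assume "x \<in> \<Union>(B0 C)"
        then have "x \<le> z" using B0_in_xs(2)[OF PN sq sdef] unfolding z_def by blast
        then show False using x by auto
      qed
    qed
    have uq: "\<And>u v. P u \<Longrightarrow> P v \<Longrightarrow> u = v"
      using u_unique[OF PN H _ blo bhi nb0, of P] unfolding P_def by auto
    have Pu: "P (uB N C)" unfolding ue using ex uq by (metis theI)
    then have u: "uB N C \<in> {z + 1 .. N - 1}" "cov0 C {z + 1 .. uB N C - 1}" "cov0 C {uB N C + 1 .. N - 1}" unfolding P_def by auto
    have un: "uB N C \<notin> \<Union>C"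
    proof (rule uncov[OF PN H _ u blo bhi])
      show "uB N C \<notin> \<Union>(B0 C)" using nb0 u(1) by blast
    qed simp
    have e1: "even (card {z + 1 .. uB N C - 1})" using cov0_props(4)[OF PN H u(2)] .
    have e2: "even (card {uB N C + 1 .. N - 1})" using cov0_props(4)[OF PN H u(3)] .
    have c1: "card {z + 1 .. uB N C - 1} = uB N C - 1 - z" by simp
    have c2': "card {uB N C + 1 .. N - 1} = N - 1 - uB N C" by simp
    have i1: "z + 1 \<le> uB N C" "uB N C \<le> N - 1" using u(1) by auto
    have f1: "even (uB N C - 1 - z)" using e1 c1 by simp
    have f2: "even (N - 1 - uB N C)" using e2 c2' by simp
    obtain k1 where k1: "uB N C - 1 - z = 2*k1" using f1 by (elim evenE)
    obtain k2 where k2: "N - 1 - uB N C = 2*k2" using f2 by (elim evenE)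
    have eu: "uB N C = z + 1 + 2*k1" using i1 k1 by linarith
    have eN: "N = z + 2 + 2*(k1 + k2)" using i1 k1 k2 N3 by (simp add: algebra_simps; linarith)
    have "odd z" using oN unfolding eN by simp
    then have "even (uB N C)" unfolding eu by simp
    then show ?thesis using un u cc zN unfolding a_def z_def by auto
  qed
qed



context
  fixes N :: nat and C :: "nat set set" and xs :: "nat list" and s :: nat
  assumes oN: "odd N" and N3: "N \<ge> 3" and CP: "C \<in> XP N" and nM: "C \<notin> XM N"
    and sq: "seqok C xs" and sdef: "s = length xs div 2" and s0: "0 < s"
begin

lemma st: "starP N C" using CP unfolding XP_def by auto
lemma PN: "PN N C" using starP_H(1)[OF st] .
lemma H: "\<forall>p\<in>B1 C. cov0 C {fst (wpair p) + 1 .. snd (wpair p) - 1}" using starP_H(2)[OF st] .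
lemma Lx: "length xs = 2*s" using L[OF PN sq sdef] .
lemma nN: "N \<notin> \<Union>C" using CP unfolding XP_def condII_def by simp
lemma oddS: "odd s"
proof -
  have c2: "condII N C" using CP unfolding XP_def by auto
  have ix: "iseq C = xs" using iseq_xs[OF PN sq sdef] .
  show ?thesis using c2 s0 unfolding condII_def ix Let_def sdef[symmetric] by auto
qed
lemma UP: "uB N C \<notin> \<Union>C \<and> 1 \<le> uB N C \<and> uB N C \<le> N - 1 \<and>
    ((odd (uB N C) \<and> uB N C < xs!0 \<and> cov0 C {1..uB N C - 1} \<and> cov0 C {uB N C + 1..xs!0 - 1} \<and> cov0 C {xs!(2*s - 1) + 1..N - 1})
   \<or> (even (uB N C) \<and> xs!(2*s - 1) < uB N C \<and> cov0 C {1..xs!0 - 1} \<and> cov0 C {xs!(2*s - 1) + 1..uB N C - 1} \<and> cov0 C {uB N C + 1..N - 1}))"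
  using u_props[OF oN N3 CP sq sdef s0] .

lemma cB0: "card (B0 C) \<noteq> 0" using card_B0[OF PN sq sdef] s0 by simp

definition adj :: "nat \<Rightarrow> bool" where
  "adj x = (if even (uB N C) then x \<in> {uB N C..N} else ((x = N) \<noteq> (x \<in> {1..uB N C})))"

lemma memE: "x \<in> eps' N C \<longleftrightarrow> ((x \<in> xsumI (dbr N) C) \<noteq> adj x)"
proof -
  have e: "eps' N C = (if even (uB N C) then symd (xsumI (dbr N) C) {uB N C .. N}
     else symd (symd (xsumI (dbr N) C) {N}) {1 .. uB N C})"
    unfolding eps'_def using nM cB0 by (simp add: Let_def)
  show ?thesis unfolding e adj_def by (cases "even (uB N C)") (auto simp: symd_mem)
qed

lemma a_le: "i < length xs \<Longrightarrow> xs!0 \<le> xs!i \<and> xs!i \<le> xs!(2*s - 1)"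
  using xs_bounds(1,2)[OF PN sq sdef] by blast

lemma adj_xs:
  assumes "x \<in> \<Union>(B0 C)"
  shows "\<not> adj x"
proof -
  have b: "xs!0 \<le> x" "x \<le> xs!(2*s - 1)" using B0_in_xs[OF PN sq sdef assms] by auto
  have "x \<in> \<Union>C" using assms B0_sub by blast
  then have xN: "x \<noteq> N" using nN by blast
  show ?thesis using UP b xN unfolding adj_def by auto
qed

lemma alpha:
  assumes pB: "p \<in> B1 C"
  shows "(Min p \<in> eps' N C) = (Max p \<in> eps' N C)"
proof -
  have pC: "p \<in> C" using pB B1_sub by blast
  define a' where "a' = Min p"
  define b' where "b' = Max p"
  have pp: "a' < b'" "p = {a', b'}" "1 \<le> a'" "b' \<le> N" using PN_pair(3,4,5,6)[OF PN pC] unfolding a'_def b'_def by auto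
  have tl: "{a'..b'} \<subseteq> \<Union>(B1 C)" "\<forall>q\<in>C. q \<inter> {a'..b'} \<noteq> {} \<longrightarrow> q \<subseteq> {a'..b'}"
    using tile[OF PN H pB] unfolding a'_def b'_def by auto
  have dp: "dbr N p = {a'..b'}" using B1_wpair(3)[OF PN pB] unfolding a'_def b'_def .
  have eqv: "(a' \<in> dbr N q) = (b' \<in> dbr N q)" if qC: "q \<in> C" for q
  proof (cases "q = p")
    case True
    then show ?thesis using dp pp by simp
  next
    case False
    define m where "m = Min q"
    define M where "M = Max q"
    have qq: "m < M" "q = {m, M}" "1 \<le> m" "M \<le> N" using PN_pair(3,4,5,6)[OF PN qC] unfolding m_def M_def by auto
    have dj: "p \<inter> q = {}" using PN False pC qC unfolding PN_def by blast
    have ne: "m \<noteq> a'" "m \<noteq> b'" "M \<noteq> a'" "M \<noteq> b'" using dj pp(2) qq(2) by auto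
    have pos: "(a' < m \<and> M < b') \<or> (m \<notin> {a'..b'} \<and> M \<notin> {a'..b'})"
    proof (cases "m \<in> {a'..b'} \<or> M \<in> {a'..b'}")
      case True
      then have "q \<inter> {a'..b'} \<noteq> {}" using qq(2) by blast
      then have "q \<subseteq> {a'..b'}" using tl(2) qC by blast
      then have "m \<in> {a'..b'}" "M \<in> {a'..b'}" using qq(2) by auto
      then show ?thesis using ne by auto
    qed auto
    show ?thesis
    proof (cases "q \<in> B1 C")
      case True
      have "dbr N q = {m..M}" using B1_wpair(3)[OF PN True] unfolding m_def M_def .
      then show ?thesis using pos pp qq by auto
    next
      case False
      then have "q \<in> B0 C" using B01[OF qC] by blast
      then have "dbr N q = {M..N} \<union> {1..m}" using B0_wpair(2)[OF PN] unfolding m_def M_def by blast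
      then show ?thesis using pos pp qq by auto
    qed
  qed
  have Seq: "{q \<in> C. a' \<in> dbr N q} = {q \<in> C. b' \<in> dbr N q}" using eqv by blast
  have S: "(a' \<in> xsumI (dbr N) C) = (b' \<in> xsumI (dbr N) C)" unfolding xsum_mem Seq ..
  have uout: "uB N C \<notin> {a'..b'}" using UP tl(1) B1_sub by blast
  have "a' \<in> \<Union>C" "b' \<in> \<Union>C" using pp(2) pC by blast+
  then have nNab: "a' \<noteq> N" "b' \<noteq> N" using nN by blast+
  have A: "adj a' = adj b'" using uout nNab pp(1,3,4) UP unfolding adj_def by auto
  show ?thesis using memE[of a'] memE[of b'] S A unfolding a'_def b'_def by simp
qed


lemma gamma:
  assumes k: "k < s"
  shows "(xs!k \<in> eps' N C) = even k" "(xs!(2*s - 1 - k) \<in> eps' N C) = even k"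
proof -
  have ix: "k < 2*s - 1 - k \<and> 2*s - 1 - k < length xs \<and> k < length xs \<and> s \<le> 2*s - 1 - k" using idx[OF PN sq sdef k] .
  have os: "odd s" using oddS .
  have ev: "odd (s - k) = even k" using os k by presburger
  have x1: "xs!k \<notin> \<Union>(B1 C)" "1 \<le> xs!k" "xs!k \<le> N" "xs!k \<in> \<Union>(B0 C)" using xs_bounds(3,4,5,6)[OF PN sq sdef] ix by auto
  have c1: "card {p \<in> C. xs!k \<in> dbr N p} = s - k"
    using cnt_nonB1[OF PN sq sdef H x1(1,2,3)] K_xk(1)[OF PN sq sdef H k] by simp
  show "(xs!k \<in> eps' N C) = even k" using memE[of "xs!k"] adj_xs[OF x1(4)] c1 ev unfolding xsum_mem by simp
  have x2: "xs!(2*s - 1 - k) \<notin> \<Union>(B1 C)" "1 \<le> xs!(2*s - 1 - k)" "xs!(2*s - 1 - k) \<le> N" "xs!(2*s - 1 - k) \<in> \<Union>(B0 C)"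
    using xs_bounds(3,4,5,6)[OF PN sq sdef] ix by auto
  have c2: "card {p \<in> C. xs!(2*s - 1 - k) \<in> dbr N p} = s - k"
    using cnt_nonB1[OF PN sq sdef H x2(1,2,3)] K_xk(2)[OF PN sq sdef H k] by simp
  show "(xs!(2*s - 1 - k) \<in> eps' N C) = even k" using memE[of "xs!(2*s - 1 - k)"] adj_xs[OF x2(4)] c2 ev unfolding xsum_mem by simp
qed

lemma delta: "eps' N C \<subseteq> {1..N}"
proof
  fix x assume x: "x \<in> eps' N C"
  show "x \<in> {1..N}"
  proof (cases "x \<in> xsumI (dbr N) C")
    case True
    then have "card {p \<in> C. x \<in> dbr N p} \<noteq> 0" unfolding xsum_mem by (metis odd_pos neq0_conv)
    then obtain p where "p \<in> C" "x \<in> dbr N p" by (metis (no_types, lifting) Collect_empty_eq card.empty)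
    then show ?thesis using dbr_bounds[OF PN] by blast
  next
    case False
    then have "adj x" using x memE by blast
    then show ?thesis using UP unfolding adj_def by (auto split: if_splits)
  qed
qed

lemma find_gap:
  assumes x: "xs!0 < x" "x < xs!(2*s - 1)" "x \<notin> set xs"
  shows "\<exists>j. j + 1 < 2*s \<and> xs!j < x \<and> x < xs!(j+1)"
proof -
  define P where "P i \<longleftrightarrow> x < xs!i" for i
  have ex: "P (2*s - 1)" using x unfolding P_def by simp
  define i where "i = (LEAST i. P i)"
  have Pi: "P i" unfolding i_def using ex by (rule LeastI)
  have ile: "i \<le> 2*s - 1" unfolding i_def using ex by (rule Least_le)
  have i0: "i \<noteq> 0" using Pi x(1) unfolding P_def by (cases "i = 0") auto
  have nP: "\<not> P (i - 1)" unfolding i_def using i0 by (metis Least_le diff_less i_def le_less_trans less_irrefl neq0_conv zero_less_one)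
  have lt: "i - 1 < length xs" using ile Lx s0 by auto
  have "xs!(i - 1) \<noteq> x" using x(3) lt by (metis nth_mem)
  then have "xs!(i - 1) < x" using nP unfolding P_def by auto
  moreover have "i - 1 + 1 < 2*s" using ile i0 s0 by auto
  moreover have "x < xs!(i - 1 + 1)" using Pi i0 unfolding P_def by simp
  ultimately show ?thesis by blast
qed

lemma beta:
  assumes x: "x \<notin> \<Union>C" "1 \<le> x" "x \<le> N"
  shows "x \<notin> eps' N C"
proof -
  have B1C: "\<Union>(B1 C) \<subseteq> \<Union>C" using B1_sub by blast
  have nB1: "x \<notin> \<Union>(B1 C)" using x(1) B1C by blast
  have nB0: "x \<notin> \<Union>(B0 C)" using x(1) B0_sub by blast
  have nxs: "x \<notin> set xs" using nB0 set_xs[OF PN sq sdef] by simp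
  have cnt: "card {p \<in> C. x \<in> dbr N p} = card {k. k < s \<and> (x \<le> xs!k \<or> xs!(2*s - 1 - k) \<le> x)}"
    using cnt_nonB1[OF PN sq sdef H nB1 x(2,3)] .
  have covd: "x \<notin> R" if "cov0 C R" for R using cov0_props(1)[OF PN H that] nB1 by blast
  have os: "odd s" using oddS .
  have a0: "xs!0 \<in> set xs" "xs!(2*s - 1) \<in> set xs" using Lx s0 by auto
  show ?thesis
  proof (cases "x < xs!0 \<or> xs!(2*s - 1) < x")
    case True
    have "card {p \<in> C. x \<in> dbr N p} = s" using cnt K_out[OF PN sq sdef H True s0] by simp
    then have inS: "x \<in> xsumI (dbr N) C" unfolding xsum_mem using os by simp
    have "adj x"
    proof (cases "odd (uB N C)")
      case True
      then have u: "uB N C < xs!0" "cov0 C {1..uB N C - 1}" "cov0 C {uB N C + 1..xs!0 - 1}" "cov0 C {xs!(2*s - 1) + 1..N - 1}"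
        "1 \<le> uB N C" "uB N C \<le> N - 1" using UP by auto
      have "x = uB N C \<or> x = N"
      proof (rule ccontr)
        assume ne: "\<not> (x = uB N C \<or> x = N)"
        have "x \<in> {1..uB N C - 1} \<or> x \<in> {uB N C + 1..xs!0 - 1} \<or> x \<in> {xs!(2*s - 1) + 1..N - 1}"
          using ne \<open>x < xs!0 \<or> xs!(2*s - 1) < x\<close> x(2,3) by auto
        then show False using covd u(2,3,4) by blast
      qed
      then show ?thesis using True u(5,6) unfolding adj_def by auto
    next
      case False
      then have u: "xs!(2*s - 1) < uB N C" "cov0 C {1..xs!0 - 1}" "cov0 C {xs!(2*s - 1) + 1..uB N C - 1}" "cov0 C {uB N C + 1..N - 1}"
        "1 \<le> uB N C" "uB N C \<le> N - 1" using UP by auto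
      have "x = uB N C \<or> x = N"
      proof (rule ccontr)
        assume ne: "\<not> (x = uB N C \<or> x = N)"
        have "x \<in> {1..xs!0 - 1} \<or> x \<in> {xs!(2*s - 1) + 1..uB N C - 1} \<or> x \<in> {uB N C + 1..N - 1}"
          using ne \<open>x < xs!0 \<or> xs!(2*s - 1) < x\<close> x(2,3) by auto
        then show False using covd u(2,3,4) by blast
      qed
      then show ?thesis using False u(5,6) unfolding adj_def by auto
    qed
    then show ?thesis using memE inS by blast
  next
    case False
    then have xin: "xs!0 < x" "x < xs!(2*s - 1)" using nxs a0 by (metis le_neq_implies_less not_less)+
    obtain j where j: "j + 1 < 2*s" "xs!j < x" "x < xs!(j+1)" using find_gap[OF xin nxs] by blast
    have js: "j + 1 = s"
    proof (rule ccontr)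
      assume "j + 1 \<noteq> s"
      then have "cov0 C {xs ! j + 1 .. xs ! (j+1) - 1}" using seq_basic(4)[OF sq] j(1) sdef by auto
      moreover have "x \<in> {xs ! j + 1 .. xs ! (j+1) - 1}" using j by auto
      ultimately show False using covd by blast
    qed
    have "xs!(s - 1) < x" "x < xs!s" using j js by (metis add_diff_cancel_right')+
    then have "card {p \<in> C. x \<in> dbr N p} = 0" using cnt K_mid[OF PN sq sdef H _ _ s0] by simp
    then have nS: "x \<notin> xsumI (dbr N) C" unfolding xsum_mem by simp
    have "xs!(2*s - 1) \<le> N" using xs_bounds(4)[OF PN sq sdef] Lx s0 by auto
    then have xN: "x \<noteq> N" using xin by auto
    have "\<not> adj x"
    proof (cases "odd (uB N C)")
      case True
      then have "uB N C < xs!0" using UP by auto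
      then show ?thesis using True xN xin unfolding adj_def by auto
    next
      case False
      then have "xs!(2*s - 1) < uB N C" using UP by auto
      then show ?thesis using False xin unfolding adj_def by auto
    qed
    then show ?thesis using memE nS by blast
  qed
qed

lemma caseC_false:
  assumes bal: "card (eps' N C \<inter> {y. odd y}) = card (eps' N C \<inter> {y. even y})"
  shows False
proof -
  define E where "E = eps' N C"
  define D1 where "D1 = {p \<in> B1 C. p \<subseteq> E}"
  define E1 where "E1 = \<Union>D1"
  define E0 where "E0 = E \<inter> \<Union>(B0 C)"
  define a where "a = xs!0"
  have fC: "finite C" using PN_finite[OF PN] .
  have fD1: "finite D1" unfolding D1_def using fC B1_sub by (metis (no_types, lifting) finite_subset mem_Collect_eq subsetI)
  have dj1: "\<forall>p\<in>D1. \<forall>q\<in>D1. p \<noteq> q \<longrightarrow> p \<inter> q = {}" using PN unfolding D1_def PN_def B1_def by blast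
  have pr1: "\<forall>p\<in>D1. card p = 2 \<and> odd (Max p - Min p)"
    using PN_pair(1)[OF PN] B1_sub unfolding D1_def B1_def by blast
  have bal1: "card (E1 \<inter> {y. odd y}) = card D1" "card (E1 \<inter> {y. even y}) = card D1"
    unfolding E1_def using balance[OF fD1 dj1 pr1] by auto
  have fE1: "finite E1" unfolding E1_def using fD1 pr1 by (metis card.infinite finite_Union zero_neq_numeral)
  have fE0: "finite E0"
  proof -
    have "E0 \<subseteq> set xs" unfolding E0_def using set_xs[OF PN sq sdef] by blast
    then show ?thesis using finite_subset by blast
  qed
  have EU: "E = E1 \<union> E0"
  proof (intro equalityI subsetI)
    fix x assume xE: "x \<in> E"
    then have "x \<in> {1..N}" using delta unfolding E_def by blast
    then have "x \<in> \<Union>C" using beta xE unfolding E_def by auto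
    then obtain p where p: "p \<in> C" "x \<in> p" by blast
    show "x \<in> E1 \<union> E0"
    proof (cases "p \<in> B1 C")
      case True
      have "p = {Min p, Max p}" using PN_pair(4)[OF PN p(1)] .
      then have "x = Min p \<or> x = Max p" using p(2) by blast
      moreover have "Min p \<in> E \<longleftrightarrow> Max p \<in> E" using alpha[OF True] unfolding E_def .
      ultimately have "Min p \<in> E" "Max p \<in> E" using xE by auto
      then have "p \<subseteq> E" using PN_pair(4)[OF PN p(1)] by (metis empty_subsetI insert_subset)
      then have "p \<in> D1" using True unfolding D1_def by blast
      then show ?thesis using p(2) unfolding E1_def by blast
    next
      case False
      then have "p \<in> B0 C" using B01[OF p(1)] by blast
      then show ?thesis using p(2) xE unfolding E0_def by blast
    qed
  next
    fix x assume "x \<in> E1 \<union> E0"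
    then show "x \<in> E" unfolding E1_def E0_def D1_def by blast
  qed
  have dj: "E1 \<inter> E0 = {}"
  proof -
    have "\<Union>(B1 C) \<inter> \<Union>(B0 C) = {}"
    proof (rule ccontr)
      assume "\<Union>(B1 C) \<inter> \<Union>(B0 C) \<noteq> {}"
      then obtain y p q where "p \<in> B1 C" "q \<in> B0 C" "y \<in> p" "y \<in> q" by blast
      moreover then have "p = q" using PN_disj[OF PN] B1_sub B0_sub by blast
      ultimately show False using B01_disj by blast
    qed
    moreover have "E1 \<subseteq> \<Union>(B1 C)" unfolding E1_def D1_def by blast
    moreover have "E0 \<subseteq> \<Union>(B0 C)" unfolding E0_def by blast
    ultimately show ?thesis by blast
  qed
  have E0par: "even y = even a" if y: "y \<in> E0" for y
  proof -
    have "y \<in> set xs" using y set_xs[OF PN sq sdef] unfolding E0_def by blast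
    then obtain i where i: "i < 2*s" "y = xs!i" using Lx by (auto simp: in_set_conv_nth)
    have yE: "y \<in> eps' N C" using y unfolding E0_def E_def by blast
    show ?thesis
    proof (cases "i < s")
      case True
      have "even i" using gamma(1)[OF True] yE i(2) by simp
      then show ?thesis using par_k[OF PN sq sdef H True] i(2) unfolding a_def by simp
    next
      case False
      define k where "k = 2*s - 1 - i"
      have k: "k < s" "2*s - 1 - k = i" using False i(1) unfolding k_def by auto
      have "even k" using gamma(2)[OF k(1)] yE i(2) k(2) by simp
      then show ?thesis using par_k[OF PN sq sdef H k(1)] par_pair[OF PN sq sdef H k(1)] i(2) k(2) unfolding a_def by simp
    qed
  qed
  have aE0: "a \<in> E0"
  proof -
    have "a \<in> eps' N C" using gamma(1)[OF s0] unfolding a_def by simp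
    moreover have "a \<in> \<Union>(B0 C)" using xs_bounds(6)[OF PN sq sdef] Lx s0 unfolding a_def by auto
    ultimately show ?thesis unfolding E0_def E_def by blast
  qed
  have E0ne: "card E0 \<ge> 1" using aE0 fE0 by (metis One_nat_def Suc_leI card_gt_0_iff empty_iff)
  show False
  proof (cases "even a")
    case True
    have s1: "E \<inter> {y. even y} = (E1 \<inter> {y. even y}) \<union> E0" using EU E0par True by auto
    have s2: "E \<inter> {y. odd y} = E1 \<inter> {y. odd y}" using EU E0par True by auto
    have dd: "(E1 \<inter> {y. even y}) \<inter> E0 = {}" using dj by blast
    have "card (E \<inter> {y. even y}) = card (E1 \<inter> {y. even y}) + card E0"
      unfolding s1 using card_Un_disjoint[OF _ fE0 dd] fE1 by simp
    then show False using bal s2 bal1 E0ne unfolding E_def by simp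
  next
    case False
    have s1: "E \<inter> {y. odd y} = (E1 \<inter> {y. odd y}) \<union> E0" using EU E0par False by auto
    have s2: "E \<inter> {y. even y} = E1 \<inter> {y. even y}" using EU E0par False by auto
    have dd: "(E1 \<inter> {y. odd y}) \<inter> E0 = {}" using dj by blast
    have "card (E \<inter> {y. odd y}) = card (E1 \<inter> {y. odd y}) + card E0"
      unfolding s1 using card_Un_disjoint[OF _ fE0 dd] fE1 by simp
    then show False using bal s2 bal1 E0ne unfolding E_def by simp
  qed
qed

end


lemma step_back:
  assumes N3: "N \<ge> 3" and oN: "odd N" and CX: "C \<in> XX N" and B: "B \<in> X0P' N"
    and sp: "eps' N C \<in> spanB B"
  shows "C \<in> X0P' N"
proof -
  have BP: "B \<in> XP N" and cb: "card (B0 B) = 0" and bN1: "N - 1 \<notin> \<Union>B" using B unfolding X0P'_def by auto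
  have stB: "starP N B" and c2B: "condII N B" using BP unfolding XP_def by auto
  have PNB: "PN N B" using starP_H(1)[OF stB] .
  have bN: "N \<notin> \<Union>B" using c2B unfolding condII_def by simp
  have fB: "finite B" using PN_finite[OF PNB] .
  have B0e: "B0 B = {}" using cb fB B0_sub finite_subset by (metis card_0_eq)
  obtain D where D: "D \<subseteq> B" "eps' N C = \<Union>D" using span_union[OF PNB sp] by blast
  have fD: "finite D" using D(1) fB finite_subset by blast
  have djD: "\<forall>p\<in>D. \<forall>q\<in>D. p \<noteq> q \<longrightarrow> p \<inter> q = {}" using PNB D(1) unfolding PN_def by blast
  have prD: "\<forall>p\<in>D. card p = 2 \<and> odd (Max p - Min p)"
  proof
    fix p assume p: "p \<in> D"
    then have pB: "p \<in> B" using D(1) by blast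
    have "p \<notin> B0 B" using B0e by blast
    then have "p \<in> B1 B" using B01[OF pB] by blast
    then show "card p = 2 \<and> odd (Max p - Min p)" using PN_pair(1)[OF PNB pB] unfolding B1_def by blast
  qed
  have bal: "card (eps' N C \<inter> {y. odd y}) = card (eps' N C \<inter> {y. even y})"
    unfolding D(2) using balance[OF fD djD prD] by simp
  have nNe: "N \<notin> eps' N C" "N - 1 \<notin> eps' N C" using D bN bN1 by blast+
  have nM: "C \<notin> XM N"
  proof
    assume "C \<in> XM N"
    then have "N \<in> eps' N C" using caseA[OF oN] by blast
    then show False using nNe by blast
  qed
  then have CP: "C \<in> XP N" using CX unfolding XX_def by blast
  have stC: "starP N C" and c2C: "condII N C" using CP unfolding XP_def by auto
  have PNC: "PN N C" using starP_H(1)[OF stC] .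
  have nNC: "N \<notin> \<Union>C" using c2C unfolding condII_def by simp
  obtain xs where sq: "seqok C xs" using stC by (rule starP_seq)
  define s where "s = length xs div 2"
  show ?thesis
  proof (cases "card (B0 C) = 0")
    case True
    have "N - 1 \<notin> \<Union>C"
    proof
      assume "N - 1 \<in> \<Union>C"
      then have "N - 1 \<in> eps' N C" using caseB[OF N3 PNC True nNC] by blast
      then show False using nNe by blast
    qed
    then show ?thesis using CP True unfolding X0P'_def by blast
  next
    case False
    then have s0: "0 < s" using card_B0[OF PNC sq s_def] by simp
    have False using caseC_false[OF oN N3 CP nM sq s_def s0 bal] .
    then show ?thesis ..
  qed
qed

theorem mainTheorem9:
  fixes N :: nat and B B' :: "nat set set"
  assumes "N \<ge> 3" and "odd N"
    and "B' \<in> XP N" and "B \<in> X0P' N"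
    and "preceq N B' B"
  shows "B' \<in> X0P' N"
proof -
  have r: "(stepR N)\<^sup>*\<^sup>* B' B" using assms(5) unfolding preceq_def by blast
  show ?thesis using r
  proof (induction rule: converse_rtranclp_induct)
    case base
    then show ?case using assms(4) .
  next
    case (step y z)
    have "y \<in> XX N" "eps' N y \<in> spanB z" using step.hyps(1) unfolding stepR_def by auto
    then show ?case using step_back[OF assms(1,2)] step.IH by blast
  qed
qed


end
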